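(* Let $\lambda_0$ be a real number, let $\lambda_1=\lambda_0$, let $\lambda_2,\dots,\lambda_n\in\mathbb{C}$, and suppose that $E_{(\lambda_2,\dots,\lambda_n)}$ is an extended Chebyshev space over $[a,b]$ ($a<b$) that is closed under complex conjugation. Let $p_{n,0},\dots,p_{n,n}$ be a Bernstein basis of $E_{(\lambda_0,\lambda_0,\lambda_2,\dots,\lambda_n)}$ for $\{a,b\}$ consisting of real-valued functions non-negative on $[a,b]$. Then there exist unique points $t_0,\dots,t_n\in[a,b]$ and unique positive coefficients $\alpha_0,\dots,\alpha_n$ such that the operator $B_n:C[a,b]\to E_{(\lambda_0,\lambda_0,\lambda_2,\dots,\lambda_n)}$, $B_nf=\sum_{k=0}^nf(t_k)\alpha_kp_{n,k}$, satisfies $B_n(e^{\lambda_0x})=e^{\lambda_0x}$ and $B_n(xe^{\lambda_0x})=xe^{\lambda_0x}$.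
   Context: For complex numbers $\mu_0,\dots,\mu_m$ (repetitions allowed), $E_{(\mu_0,\dots,\mu_m)}=\{f\in C^\infty(\mathbb{R},\mathbb{C}):(\frac{d}{dx}-\mu_0)\cdots(\frac{d}{dx}-\mu_m)f=0\}$ (dimension $m+1$), considered on $[a,b]$; it is closed under complex conjugation if $\bar f$ belongs to it whenever $f$ does. An $(m+1)$-dimensional space $V\subset C^m([a,b],\mathbb{C})$ is an extended Chebyshev space over $[a,b]$ if every non-zero $f\in V$ has at most $m$ zeros in $[a,b]$ counting multiplicities. A function has a zero of order $k$ at $c$ if $f(c)=\dots=f^{(k-1)}(c)=0\ne f^{(k)}(c)$ (one-sided at endpoints); a Bernstein basis for $\{a,b\}$ of an $(m+1)$-dimensional space is a system $p_{m,0},\dots,p_{m,m}$ in it with $p_{m,k}$ having a zero of order exactly $k$ at $a$ and exactly $m-k$ at $b$. *)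

theory Defs
  imports "HOL-Analysis.Analysis"
begin

definition Dv :: "(real \<Rightarrow> complex) \<Rightarrow> (real \<Rightarrow> complex)" where
  "Dv g = (\<lambda>x. vector_derivative g (at x))"

definition smooth_fun :: "(real \<Rightarrow> complex) \<Rightarrow> bool" where
  "smooth_fun f \<longleftrightarrow> (\<forall>k x. ((Dv ^^ k) f) differentiable (at x))"

fun Lop :: "complex list \<Rightarrow> (real \<Rightarrow> complex) \<Rightarrow> (real \<Rightarrow> complex)" where
  "Lop [] f = f"
| "Lop (\<mu> # \<mu>s) f = (\<lambda>x. Dv (Lop \<mu>s f) x - \<mu> * Lop \<mu>s f x)"

definition Espace :: "complex list \<Rightarrow> (real \<Rightarrow> complex) set" where
  "Espace \<mu>s = {f. smooth_fun f \<and> (\<forall>x. Lop \<mu>s f x = 0)}"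

definition closed_under_cnj :: "(real \<Rightarrow> complex) set \<Rightarrow> bool" where
  "closed_under_cnj V \<longleftrightarrow> (\<forall>f\<in>V. (\<lambda>x. cnj (f x)) \<in> V)"

definition zero_of_order_ge :: "(real \<Rightarrow> complex) \<Rightarrow> real \<Rightarrow> nat \<Rightarrow> bool" where
  "zero_of_order_ge f c k \<longleftrightarrow> (\<forall>j<k. (Dv ^^ j) f c = 0)"

definition zero_of_order :: "(real \<Rightarrow> complex) \<Rightarrow> real \<Rightarrow> nat \<Rightarrow> bool" where
  "zero_of_order f c k \<longleftrightarrow> zero_of_order_ge f c k \<and> (Dv ^^ k) f c \<noteq> 0"

text \<open>Extended Chebyshev space over [a,b] (with dim V = m+1): every f in V that is
  non-zero on [a,b] has at most m zeros in [a,b] counting multiplicities.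
  m is an integer so that the degenerate case m = -1 is allowed.\<close>
definition ext_chebyshev :: "(real \<Rightarrow> complex) set \<Rightarrow> int \<Rightarrow> real \<Rightarrow> real \<Rightarrow> bool" where
  "ext_chebyshev V m a b \<longleftrightarrow>
     (\<forall>f\<in>V. (\<exists>x\<in>{a..b}. f x \<noteq> 0) \<longrightarrow>
        (\<forall>S mult. finite S \<and> S \<subseteq> {a..b} \<and> (\<forall>c\<in>S. zero_of_order_ge f c (mult c))
            \<longrightarrow> int (\<Sum>c\<in>S. mult c) \<le> m))"

definition bernstein_basis :: "(real \<Rightarrow> complex) set \<Rightarrow> nat \<Rightarrow> real \<Rightarrow> real \<Rightarrow> (nat \<Rightarrow> real \<Rightarrow> complex) \<Rightarrow> bool" where
  "bernstein_basis V m a b p \<longleftrightarrow>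
     (\<forall>k\<le>m. p k \<in> V \<and> zero_of_order (p k) a k \<and> zero_of_order (p k) b (m - k))"

end

theory Submission
  imports Defs
begin


lemma Dv_at: "(f has_vector_derivative f') (at x) \<Longrightarrow> Dv f x = f'"
  by (simp add: Dv_def vector_derivative_at)

lemma Dv_works: "f differentiable (at x) \<Longrightarrow> (f has_vector_derivative Dv f x) (at x)"
  unfolding Dv_def using vector_derivative_works by blast

lemma smooth_diff: "smooth_fun f \<Longrightarrow> f differentiable (at x)"
  unfolding smooth_fun_def by (metis funpow_0)

lemma smooth_Dvk_diff: "smooth_fun f \<Longrightarrow> (Dv ^^ k) f differentiable (at x)"
  unfolding smooth_fun_def by blast

lemma smooth_Dv: "smooth_fun f \<Longrightarrow> smooth_fun (Dv f)"
  unfolding smooth_fun_def by (metis funpow_Suc_right o_apply)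

lemma lin_diff: fixes A B :: "real \<Rightarrow> complex" shows "A differentiable (at x) \<Longrightarrow> B differentiable (at x)
   \<Longrightarrow> (\<lambda>x. c * A x + B x) differentiable (at x)"
  by (rule differentiableI_vector, rule has_vector_derivative_add, rule has_vector_derivative_mult_right,
     rule Dv_works, assumption, rule Dv_works, assumption)

lemma Dv_lin_at: "f differentiable (at x) \<Longrightarrow> g differentiable (at x) \<Longrightarrow>
   Dv (\<lambda>x. c * f x + g x) x = c * Dv f x + Dv g x"
  by (intro Dv_at derivative_intros Dv_works)

lemma Dvk_lin: "smooth_fun f \<Longrightarrow> smooth_fun g \<Longrightarrow>
   (Dv ^^ k) (\<lambda>x. c * f x + g x) = (\<lambda>x. c * (Dv ^^ k) f x + (Dv ^^ k) g x)"
proof (induction k)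
  case 0 then show ?case by simp
next
  case (Suc k)
  show ?case using Suc
    by (auto intro!: ext Dv_lin_at smooth_Dvk_diff)
qed

lemma smooth_lin: "smooth_fun f \<Longrightarrow> smooth_fun g \<Longrightarrow> smooth_fun (\<lambda>x. c * f x + g x)"
  unfolding smooth_fun_def[of "\<lambda>x. c * f x + g x"]
  by (auto simp: Dvk_lin intro!: lin_diff smooth_Dvk_diff)

lemma Dv_lin: "smooth_fun f \<Longrightarrow> smooth_fun g \<Longrightarrow>
   Dv (\<lambda>x. c * f x + g x) = (\<lambda>x. c * Dv f x + Dv g x)"
  using Dvk_lin[of f g 1 c] by simp

lemma Dv_zero: "Dv (\<lambda>x. 0) = (\<lambda>x. 0)"
  by (rule ext, rule Dv_at, rule derivative_intros)

lemma Dvk_zero: "(Dv ^^ k) (\<lambda>x. 0) = (\<lambda>x. 0)"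
  by (induction k) (simp_all add: Dv_zero)

lemma smooth_zero: "smooth_fun (\<lambda>x. 0)"
  unfolding smooth_fun_def by (simp add: Dvk_zero)

lemma smooth_sum_Dvk:
  assumes "finite K" "\<And>k. k \<in> K \<Longrightarrow> smooth_fun (g k)"
  shows "smooth_fun (\<lambda>x. \<Sum>k\<in>K. c k * g k x) \<and>
     (\<forall>j. (Dv ^^ j) (\<lambda>x. \<Sum>k\<in>K. c k * g k x) = (\<lambda>x. \<Sum>k\<in>K. c k * (Dv ^^ j) (g k) x))"
  using assms
proof (induction K rule: finite_induct)
  case empty then show ?case by (simp add: smooth_zero Dvk_zero)
next
  case (insert k K)
  then have s: "smooth_fun (\<lambda>x. \<Sum>k\<in>K. c k * g k x)" and gk: "smooth_fun (g k)" by auto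
  have e: "(\<lambda>x. \<Sum>k\<in>insert k K. c k * g k x) = (\<lambda>x. c k * g k x + (\<Sum>k\<in>K. c k * g k x))"
    using insert by simp
  show ?case unfolding e using insert s gk
    by (simp add: smooth_lin Dvk_lin)
qed

lemma smooth_sum: "finite K \<Longrightarrow> (\<And>k. k \<in> K \<Longrightarrow> smooth_fun (g k)) \<Longrightarrow>
   smooth_fun (\<lambda>x. \<Sum>k\<in>K. c k * g k x)"
  using smooth_sum_Dvk by blast

lemma Dvk_sum: "finite K \<Longrightarrow> (\<And>k. k \<in> K \<Longrightarrow> smooth_fun (g k)) \<Longrightarrow>
   (Dv ^^ j) (\<lambda>x. \<Sum>k\<in>K. c k * g k x) = (\<lambda>x. \<Sum>k\<in>K. c k * (Dv ^^ j) (g k) x)"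
  using smooth_sum_Dvk by blast

definition Dl :: "complex \<Rightarrow> (real \<Rightarrow> complex) \<Rightarrow> (real \<Rightarrow> complex)" where
  "Dl \<mu> f = (\<lambda>x. Dv f x - \<mu> * f x)"

lemma Lop_Cons: "Lop (\<mu> # \<mu>s) f = Dl \<mu> (Lop \<mu>s f)"
  by (simp add: Dl_def)

declare Lop.simps(2)[simp del]

lemma Dl_alt: "Dl \<mu> f = (\<lambda>x. (-\<mu>) * f x + Dv f x)"
  by (auto simp: Dl_def)

lemma smooth_Dl: "smooth_fun f \<Longrightarrow> smooth_fun (Dl \<mu> f)"
  unfolding Dl_alt by (intro smooth_lin smooth_Dv)

lemma Dl_lin: assumes "smooth_fun f" "smooth_fun g" shows
   "Dl \<mu> (\<lambda>x. c * f x + g x) = (\<lambda>x. c * Dl \<mu> f x + Dl \<mu> g x)"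
  unfolding Dl_def Dv_lin[OF assms] by (auto simp: algebra_simps)

lemma Dl_sum: "finite K \<Longrightarrow> (\<And>k. k \<in> K \<Longrightarrow> smooth_fun (g k)) \<Longrightarrow>
   Dl \<mu> (\<lambda>x. \<Sum>k\<in>K. c k * g k x) = (\<lambda>x. \<Sum>k\<in>K. c k * Dl \<mu> (g k) x)"
  using Dvk_sum[of K g 1 c]
  by (auto simp: Dl_def sum_subtractf sum_distrib_left algebra_simps)

lemma Dl_comm: "smooth_fun f \<Longrightarrow> Dl \<mu> (Dl \<nu> f) = Dl \<nu> (Dl \<mu> f)"
proof -
  assume f: "smooth_fun f"
  have 1: "Dl \<mu> (Dl \<nu> f) = (\<lambda>x. (-\<nu>) * Dl \<mu> f x + Dl \<mu> (Dv f) x)"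
    by (subst Dl_alt[of \<nu>], rule Dl_lin[OF f smooth_Dv[OF f]])
  have 2: "Dl \<nu> (Dl \<mu> f) = (\<lambda>x. (-\<mu>) * Dl \<nu> f x + Dl \<nu> (Dv f) x)"
    by (subst Dl_alt[of \<mu>], rule Dl_lin[OF f smooth_Dv[OF f]])
  show ?thesis unfolding 1 2 by (auto simp: Dl_def algebra_simps)
qed

lemma smooth_Lop: "smooth_fun f \<Longrightarrow> smooth_fun (Lop \<mu>s f)"
  by (induction \<mu>s) (auto simp: Lop_Cons smooth_Dl)

lemma Lop_Dl: "smooth_fun f \<Longrightarrow> Lop \<mu>s (Dl \<nu> f) = Dl \<nu> (Lop \<mu>s f)"
  by (induction \<mu>s) (auto simp: Lop_Cons Dl_comm smooth_Lop)

lemma Lop_lin: "smooth_fun f \<Longrightarrow> smooth_fun g \<Longrightarrow>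
   Lop \<mu>s (\<lambda>x. c * f x + g x) = (\<lambda>x. c * Lop \<mu>s f x + Lop \<mu>s g x)"
  by (induction \<mu>s) (auto simp: Lop_Cons Dl_lin smooth_Lop)

lemma Lop_sum: "finite K \<Longrightarrow> (\<And>k. k \<in> K \<Longrightarrow> smooth_fun (g k)) \<Longrightarrow>
   Lop \<mu>s (\<lambda>x. \<Sum>k\<in>K. c k * g k x) = (\<lambda>x. \<Sum>k\<in>K. c k * Lop \<mu>s (g k) x)"
  by (induction \<mu>s) (auto simp: Lop_Cons Dl_sum smooth_Lop)

lemma Espace_lin: "f \<in> Espace \<mu>s \<Longrightarrow> g \<in> Espace \<mu>s \<Longrightarrow> (\<lambda>x. c * f x + g x) \<in> Espace \<mu>s"
  unfolding Espace_def by (auto simp: Lop_lin smooth_lin)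

lemma Espace_sum: "finite K \<Longrightarrow> (\<And>k. k \<in> K \<Longrightarrow> g k \<in> Espace \<mu>s) \<Longrightarrow>
   (\<lambda>x. \<Sum>k\<in>K. c k * g k x) \<in> Espace \<mu>s"
  unfolding Espace_def by (auto simp: Lop_sum smooth_sum)



definition zD :: "complex \<Rightarrow> (real \<Rightarrow> complex) \<Rightarrow> real \<Rightarrow> nat \<Rightarrow> bool" where
  "zD \<mu> f c k \<longleftrightarrow> (\<forall>j<k. (Dl \<mu> ^^ j) f c = 0)"

lemma zog_Suc: "zero_of_order_ge f c (Suc k) \<longleftrightarrow> f c = 0 \<and> zero_of_order_ge (Dv f) c k"
  unfolding zero_of_order_ge_def All_less_Suc2 by (simp add: funpow_Suc_right del: funpow.simps)

lemma zD_Suc: "zD \<mu> f c (Suc k) \<longleftrightarrow> f c = 0 \<and> zD \<mu> (Dl \<mu> f) c k"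
  unfolding zD_def All_less_Suc2 by (simp add: funpow_Suc_right del: funpow.simps)

lemma zog_mono: "zero_of_order_ge f c k \<Longrightarrow> j \<le> k \<Longrightarrow> zero_of_order_ge f c j"
  unfolding zero_of_order_ge_def by auto

lemma zD_mono: "zD \<mu> f c k \<Longrightarrow> j \<le> k \<Longrightarrow> zD \<mu> f c j"
  unfolding zD_def by auto

lemma Dvk_Dl: "smooth_fun f \<Longrightarrow>
  (Dv ^^ j) (Dl \<mu> f) = (\<lambda>x. (Dv ^^ j) (Dv f) x - \<mu> * (Dv ^^ j) f x)"
  unfolding Dl_alt by (subst Dvk_lin) (auto simp: smooth_Dv)

lemma Dvk_Suc: "(Dv ^^ Suc j) f = (Dv ^^ j) (Dv f)"
  by (simp add: funpow_Suc_right del: funpow.simps)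

lemma Dlk_Suc: "(Dl \<mu> ^^ Suc j) f = (Dl \<mu> ^^ j) (Dl \<mu> f)"
  by (simp add: funpow_Suc_right del: funpow.simps)

lemma zog_Dl: "smooth_fun f \<Longrightarrow> zero_of_order_ge f c (Suc k) \<Longrightarrow> zero_of_order_ge (Dl \<mu> f) c k"
  unfolding zero_of_order_ge_def by (auto simp: Dvk_Dl Dvk_Suc[symmetric] simp del: funpow.simps)

lemma zog_Dl_rev:
  assumes f: "smooth_fun f" and f0: "f c = 0" and z: "zero_of_order_ge (Dl \<mu> f) c k"
  shows "zero_of_order_ge f c (Suc k)"
  unfolding zero_of_order_ge_def
proof (intro allI impI)
  fix j assume "j < Suc k"
  then show "(Dv ^^ j) f c = 0"
  proof (induction j)
    case 0 then show ?case using f0 by simp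
  next
    case (Suc j)
    have "(Dv ^^ j) (Dl \<mu> f) c = 0" using z Suc.prems unfolding zero_of_order_ge_def by auto
    then show ?case using Suc f by (simp add: Dvk_Dl Dvk_Suc del: funpow.simps)
  qed
qed

lemma smooth_Dlk: "smooth_fun f \<Longrightarrow> smooth_fun ((Dl \<mu> ^^ k) f)"
  by (induction k) (auto simp: smooth_Dl)

lemma zog_zD: "smooth_fun f \<Longrightarrow> zero_of_order_ge f c k \<longleftrightarrow> zD \<mu> f c k"
proof (induction k arbitrary: f)
  case 0 then show ?case by (simp add: zero_of_order_ge_def zD_def)
next
  case (Suc k)
  have "zero_of_order_ge f c (Suc k) \<longleftrightarrow> f c = 0 \<and> zero_of_order_ge (Dl \<mu> f) c k"
    using zog_Dl[OF Suc.prems] zog_Dl_rev[OF Suc.prems] zog_Suc by metis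
  also have "\<dots> \<longleftrightarrow> f c = 0 \<and> zD \<mu> (Dl \<mu> f) c k"
    using Suc.IH[OF smooth_Dl[OF Suc.prems]] by simp
  finally show ?case by (simp add: zD_Suc)
qed

lemma Dlk_exact: "smooth_fun f \<Longrightarrow> zero_of_order_ge f c k \<Longrightarrow> (Dl \<mu> ^^ k) f c = (Dv ^^ k) f c"
proof (induction k arbitrary: f)
  case 0 then show ?case by simp
next
  case (Suc k)
  have "(Dl \<mu> ^^ Suc k) f c = (Dl \<mu> ^^ k) (Dl \<mu> f) c" by (simp add: Dlk_Suc del: funpow.simps)
  also have "\<dots> = (Dv ^^ k) (Dl \<mu> f) c"
    using Suc.IH[OF smooth_Dl[OF Suc.prems(1)] zog_Dl[OF Suc.prems]] .
  also have "\<dots> = (Dv ^^ Suc k) f c"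
    using Suc.prems by (simp add: Dvk_Dl Dvk_Suc zero_of_order_ge_def del: funpow.simps)
  finally show ?case .
qed

lemma zog_Lop: "smooth_fun f \<Longrightarrow> zero_of_order_ge f c (m + length \<mu>s) \<Longrightarrow>
   zero_of_order_ge (Lop \<mu>s f) c m"
proof (induction \<mu>s arbitrary: m)
  case Nil then show ?case by simp
next
  case (Cons \<mu> \<mu>s)
  have "zero_of_order_ge (Lop \<mu>s f) c (Suc m)" using Cons by simp
  then show ?case using Cons by (simp add: Lop_Cons zog_Dl smooth_Lop)
qed

lemma Dl_zero_imp:
  assumes g: "smooth_fun g" and D: "\<And>x. Dl \<mu> g x = 0" and g0: "g c = 0"
  shows "g x = 0"
proof -
  define h where "h = (\<lambda>x. exp (- \<mu> * complex_of_real x) * g x)"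
  have "(h has_vector_derivative 0) (at t)" for t
  proof -
    have d1: "((\<lambda>z. exp (- \<mu> * z)) has_field_derivative (exp (- \<mu> * complex_of_real t) * (- \<mu>))) (at (complex_of_real t))"
      by (auto intro!: derivative_eq_intros)
    have d1': "((\<lambda>x. exp (- \<mu> * complex_of_real x)) has_vector_derivative (exp (- \<mu> * complex_of_real t) * (- \<mu>))) (at t)"
      using has_vector_derivative_real_field[OF d1] by simp
    have "(h has_vector_derivative (exp (- \<mu> * complex_of_real t) * Dv g t + (exp (- \<mu> * complex_of_real t) * (- \<mu>)) * g t)) (at t)"
      unfolding h_def by (rule has_vector_derivative_mult[OF d1' Dv_works[OF smooth_diff[OF g]]])
    moreover have "exp (- \<mu> * complex_of_real t) * Dv g t + (exp (- \<mu> * complex_of_real t) * (- \<mu>)) * g t = 0"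
      using D[of t] by (simp add: Dl_def algebra_simps)
    ultimately show ?thesis by simp
  qed
  then have "\<exists>c0. \<forall>x\<in>UNIV. h x = c0"
    by (intro has_derivative_zero_constant) (auto simp: has_vector_derivative_def)
  then obtain c0 where "\<And>x. h x = c0" by auto
  then have "h x = h c" by simp
  then show ?thesis using g0 by (simp add: h_def)
qed

lemma Espace_unique: "f \<in> Espace \<mu>s \<Longrightarrow> zero_of_order_ge f c (length \<mu>s) \<Longrightarrow> f x = 0"
proof (induction \<mu>s arbitrary: f)
  case Nil then show ?case by (simp add: Espace_def)
next
  case (Cons \<mu> \<mu>s)
  have f: "smooth_fun f" and L: "\<And>x. Lop (\<mu> # \<mu>s) f x = 0" using Cons.prems by (auto simp: Espace_def)
  have z1: "zero_of_order_ge (Lop \<mu>s f) c 1"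
    using zog_Lop[OF f, of c 1 \<mu>s] Cons.prems by simp
  have "Lop \<mu>s f y = 0" for y
    by (rule Dl_zero_imp[OF smooth_Lop[OF f], where \<mu>=\<mu> and c=c]) (use L z1 in \<open>auto simp: Lop_Cons zero_of_order_ge_def\<close>)
  then have "f \<in> Espace \<mu>s" using f by (simp add: Espace_def)
  moreover have "zero_of_order_ge f c (length \<mu>s)" using Cons.prems zog_mono by fastforce
  ultimately show ?case using Cons.IH by blast
qed

lemma expand:
  assumes pE: "\<And>k. k \<le> n \<Longrightarrow> p k \<in> Espace L" and len: "length L = Suc n"
    and zo: "\<And>k. k \<le> n \<Longrightarrow> zero_of_order_ge (p k) a k \<and> (Dv ^^ k) (p k) a \<noteq> 0"
    and f: "f \<in> Espace L"
  shows "\<exists>\<beta>. \<forall>x. f x = (\<Sum>k\<le>n. \<beta> k * p k x)"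
proof -
  have ps: "smooth_fun (p k)" if "k \<le> n" for k using pE[OF that] by (simp add: Espace_def)
  have fs: "smooth_fun f" using f by (simp add: Espace_def)
  have rs: "smooth_fun (\<lambda>x. f x - (\<Sum>k<m. \<beta> k * p k x))" if "m \<le> Suc n" for m \<beta>
  proof -
    have "smooth_fun (\<lambda>x. (-1) * (\<Sum>k<m. \<beta> k * p k x) + f x)"
      by (intro smooth_lin fs smooth_sum) (use ps that in auto)
    then show ?thesis by simp
  qed
  have main: "\<exists>\<beta>. zero_of_order_ge (\<lambda>x. f x - (\<Sum>k<m. \<beta> k * p k x)) a m" if "m \<le> Suc n" for m
    using that
  proof (induction m)
    case 0 then show ?case by (simp add: zero_of_order_ge_def)
  next
    case (Suc m)
    then obtain \<beta> where b: "zero_of_order_ge (\<lambda>x. f x - (\<Sum>k<m. \<beta> k * p k x)) a m" by auto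
    define r where "r = (\<lambda>x. f x - (\<Sum>k<m. \<beta> k * p k x))"
    have mn: "m \<le> n" using Suc by simp
    define \<gamma> where "\<gamma> = (Dv ^^ m) r a / (Dv ^^ m) (p m) a"
    define \<beta>' where "\<beta>' = \<beta>(m := \<gamma>)"
    have eq: "(\<lambda>x. f x - (\<Sum>k<Suc m. \<beta>' k * p k x)) = (\<lambda>x. (-\<gamma>) * p m x + r x)"
    proof
      fix x
      have "(\<Sum>k<m. \<beta>' k * p k x) = (\<Sum>k<m. \<beta> k * p k x)"
        by (rule sum.cong) (auto simp: \<beta>'_def)
      then show "f x - (\<Sum>k<Suc m. \<beta>' k * p k x) = (-\<gamma>) * p m x + r x"
        by (simp add: r_def \<beta>'_def)
    qed
    have rsm: "smooth_fun r" unfolding r_def using rs Suc.prems by simp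
    have "zero_of_order_ge (\<lambda>x. (-\<gamma>) * p m x + r x) a (Suc m)"
      unfolding zero_of_order_ge_def
    proof (intro allI impI)
      fix j assume j: "j < Suc m"
      have "(Dv ^^ j) (\<lambda>x. (-\<gamma>) * p m x + r x) a = (-\<gamma>) * (Dv ^^ j) (p m) a + (Dv ^^ j) r a"
        by (subst Dvk_lin[OF ps[OF mn] rsm]) simp
      also have "\<dots> = 0"
      proof (cases "j < m")
        case True
        then show ?thesis using zo[OF mn] b unfolding zero_of_order_ge_def r_def by auto
      next
        case False
        then have "j = m" using j by simp
        then show ?thesis using zo[OF mn] by (simp add: \<gamma>_def del: funpow.simps)
      qed
      finally show "(Dv ^^ j) (\<lambda>x. (-\<gamma>) * p m x + r x) a = 0" .
    qed
    then show ?case unfolding eq[symmetric] by blast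
  qed
  obtain \<beta> where b: "zero_of_order_ge (\<lambda>x. f x - (\<Sum>k<Suc n. \<beta> k * p k x)) a (Suc n)"
    using main by blast
  have "(\<lambda>x. (-1) * (\<Sum>k<Suc n. \<beta> k * p k x) + f x) \<in> Espace L"
    by (intro Espace_lin Espace_sum f) (use pE in auto)
  moreover have "(\<lambda>x. (-1) * (\<Sum>k<Suc n. \<beta> k * p k x) + f x) = (\<lambda>x. f x - (\<Sum>k<Suc n. \<beta> k * p k x))"
    by (rule ext) (simp only: mult_minus1 add.commute diff_conv_add_uminus)
  ultimately have E: "(\<lambda>x. f x - (\<Sum>k<Suc n. \<beta> k * p k x)) \<in> Espace L" by (simp only:)
  then have "f x - (\<Sum>k<Suc n. \<beta> k * p k x) = 0" for x
    using Espace_unique[OF E, of a x] b len by simp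
  then show ?thesis by (auto simp: lessThan_Suc_atMost)
qed



abbreviation DL :: "real \<Rightarrow> (real \<Rightarrow> complex) \<Rightarrow> (real \<Rightarrow> complex)" where
  "DL l \<equiv> Dl (complex_of_real l)"

definition rv :: "(real \<Rightarrow> complex) \<Rightarrow> bool" where
  "rv f \<longleftrightarrow> (\<forall>x. Im (f x) = 0)"

lemma rv_real: "rv f \<Longrightarrow> f x = complex_of_real (Re (f x))"
  unfolding rv_def by (simp add: complex_eq_iff)

lemma rv_Dv_at: assumes "rv f" "f differentiable (at x)" shows "Im (Dv f x) = 0"
proof -
  have "((\<lambda>x. Im (f x)) has_field_derivative Im (Dv f x)) (at x)"
    by (rule has_field_derivative_Im[OF Dv_works[OF assms(2)]])
  moreover have "(\<lambda>x. Im (f x)) = (\<lambda>x. 0)" using assms(1) by (auto simp: rv_def)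
  ultimately have "((\<lambda>x. 0) has_field_derivative Im (Dv f x)) (at x)" by simp
  then show ?thesis using DERIV_const DERIV_unique by blast
qed

lemma rv_Dl: "rv f \<Longrightarrow> smooth_fun f \<Longrightarrow> rv (DL l f)"
  unfolding rv_def Dl_def using rv_Dv_at[of f] smooth_diff[of f] by (simp add: rv_def)

lemma rv_Dlk: "rv f \<Longrightarrow> smooth_fun f \<Longrightarrow> rv ((DL l ^^ k) f)"
  by (induction k) (auto intro: rv_Dl smooth_Dlk)

lemma rv_sum: "(\<And>k. k \<in> K \<Longrightarrow> rv (g k)) \<Longrightarrow> rv (\<lambda>x. \<Sum>k\<in>K. complex_of_real (c k) * g k x)"
  unfolding rv_def by (auto simp: Im_sum intro!: sum.neutral)

lemma rv_lin: "rv f \<Longrightarrow> rv g \<Longrightarrow> rv (\<lambda>x. complex_of_real c * f x + g x)"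
  unfolding rv_def by auto

lemma rv_eq0: "rv f \<Longrightarrow> Re (f x) = 0 \<Longrightarrow> f x = 0"
  unfolding rv_def by (simp add: complex_eq_iff)

lemma phi_deriv:
  assumes "f differentiable (at t)"
  shows "((\<lambda>t. exp (- l * t) * Re (f t)) has_real_derivative (exp (- l * t) * Re (DL l f t))) (at t)"
proof -
  have e: "((\<lambda>t. exp (- l * t)) has_real_derivative (exp (- l * t) * (- l))) (at t)"
    by (auto intro!: derivative_eq_intros)
  have r: "((\<lambda>t. Re (f t)) has_real_derivative Re (Dv f t)) (at t)"
    by (rule has_field_derivative_Re[OF Dv_works[OF assms]])
  have "((\<lambda>t. exp (- l * t) * Re (f t)) has_real_derivative
      (exp (- l * t) * (- l) * Re (f t) + Re (Dv f t) * exp (- l * t))) (at t)"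
    by (rule DERIV_mult[OF e r])
  moreover have "exp (- l * t) * (- l) * Re (f t) + Re (Dv f t) * exp (- l * t) = exp (- l * t) * Re (DL l f t)"
    by (simp add: Dl_def algebra_simps)
  ultimately show ?thesis by simp
qed

lemma mvtD:
  assumes f: "smooth_fun f" and ab: "a < b"
  shows "\<exists>z. a < z \<and> z < b \<and> exp (- l * b) * Re (f b) - exp (- l * a) * Re (f a) = (b - a) * (exp (- l * z) * Re (DL l f z))"
  using MVT2[OF ab, of "\<lambda>t. exp (- l * t) * Re (f t)" "\<lambda>t. exp (- l * t) * Re (DL l f t)"]
    phi_deriv[OF smooth_diff[OF f]] by blast

lemma rolleD:
  assumes f: "smooth_fun f" "rv f" and xy: "x < y" and z: "f x = 0" "f y = 0"
  shows "\<exists>z. x < z \<and> z < y \<and> DL l f z = 0"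
proof -
  obtain z where z1: "x < z" "z < y" and e: "exp (- l * y) * Re (f y) - exp (- l * x) * Re (f x) = (y - x) * (exp (- l * z) * Re (DL l f z))"
    using mvtD[OF f(1) xy] by blast
  then have "Re (DL l f z) = 0" using z xy by simp
  then have "DL l f z = 0" by (rule rv_eq0[OF rv_Dl[OF f(2,1)]])
  then show ?thesis using z1 by blast
qed

lemma constD:
  assumes f: "smooth_fun f" "rv f" and D: "\<And>t. a \<le> t \<Longrightarrow> t \<le> b \<Longrightarrow> DL l f t = 0"
    and c: "a \<le> c" "c \<le> b" "f c = 0" and t: "a \<le> t" "t \<le> b"
  shows "f t = 0"
proof -
  have "Re (f t) = 0"
  proof (cases t c rule: linorder_cases)
    case less
    obtain z where "t < z" "z < c" and e: "exp (- l * c) * Re (f c) - exp (- l * t) * Re (f t) = (c - t) * (exp (- l * z) * Re (DL l f z))"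
      using mvtD[OF f(1) less] by blast
    then have "DL l f z = 0" using D c t by auto
    then show ?thesis using e c by simp
  next
    case equal then show ?thesis using c by simp
  next
    case greater
    obtain z where "c < z" "z < t" and e: "exp (- l * t) * Re (f t) - exp (- l * c) * Re (f c) = (t - c) * (exp (- l * z) * Re (DL l f z))"
      using mvtD[OF f(1) greater] by blast
    then have "DL l f z = 0" using D c t by auto
    then show ?thesis using e c by simp
  qed
  then show ?thesis by (rule rv_eq0[OF f(2)])
qed

lemma Dl_neg: "smooth_fun f \<Longrightarrow> Dl \<mu> (\<lambda>x. - f x) = (\<lambda>x. - Dl \<mu> f x)"
  using Dl_lin[OF _ smooth_zero, of f \<mu> "-1"] by (simp add: Dl_def Dv_zero)

lemma smooth_neg: "smooth_fun f \<Longrightarrow> smooth_fun (\<lambda>x. - f x)"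
  using smooth_lin[OF _ smooth_zero, of f "-1"] by simp

lemma Dlk_neg: "smooth_fun f \<Longrightarrow> (Dl \<mu> ^^ k) (\<lambda>x. - f x) = (\<lambda>x. - (Dl \<mu> ^^ k) f x)"
  by (induction k) (auto simp: Dl_neg smooth_Dlk)

lemma TS:
  assumes "smooth_fun f" "rv f" "zD (complex_of_real l) f a m" "Re ((DL l ^^ m) f a) > 0"
  shows "\<exists>\<epsilon>>0. \<forall>t. a < t \<and> t < a + \<epsilon> \<longrightarrow> Re (f t) > 0"
  using assms
proof (induction m arbitrary: f)
  case 0
  have "isCont f a" by (rule differentiable_imp_continuous_within[OF smooth_diff[OF 0(1)]])
  then have "isCont (\<lambda>t. Re (f t)) a" by (rule continuous_Re)
  then have "(\<lambda>t. Re (f t)) \<midarrow>a\<rightarrow> Re (f a)" by (simp add: isCont_def)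
  from LIM_fun_gt_zero[OF this] obtain r where "0 < r" "\<forall>x. x \<noteq> a \<and> \<bar>a - x\<bar> < r \<longrightarrow> 0 < Re (f x)"
    using 0 by auto
  then show ?case by (intro exI[of _ r]) auto
next
  case (Suc m)
  have fa: "f a = 0" and z: "zD (complex_of_real l) (DL l f) a m" using Suc.prems(3) by (auto simp: zD_Suc)
  have "Re ((DL l ^^ m) (DL l f) a) > 0" using Suc.prems(4) by (simp add: Dlk_Suc del: funpow.simps)
  from Suc.IH[OF smooth_Dl[OF Suc.prems(1)] rv_Dl[OF Suc.prems(2,1)] z this]
  obtain \<epsilon> where e: "\<epsilon> > 0" "\<forall>t. a < t \<and> t < a + \<epsilon> \<longrightarrow> Re (DL l f t) > 0" by blast
  show ?case
  proof (intro exI[of _ \<epsilon>] conjI allI impI)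
    fix t assume t: "a < t \<and> t < a + \<epsilon>"
    obtain z where "a < z" "z < t" and eq: "exp (- l * t) * Re (f t) - exp (- l * a) * Re (f a) = (t - a) * (exp (- l * z) * Re (DL l f z))"
      using mvtD[OF Suc.prems(1), of a t] t by blast
    then have "Re (DL l f z) > 0" using e t by auto
    then have "exp (- l * t) * Re (f t) > 0" using eq fa t by simp
    then show "Re (f t) > 0" by (simp add: zero_less_mult_iff)
  qed (use e in auto)
qed

lemma zD_neg: "smooth_fun f \<Longrightarrow> zD \<mu> (\<lambda>x. - f x) c m \<longleftrightarrow> zD \<mu> f c m"
  unfolding zD_def by (simp add: Dlk_neg)

lemma rv_neg: "rv f \<Longrightarrow> rv (\<lambda>x. - f x)"
  unfolding rv_def by simp

lemma sign_pos:
  assumes f: "smooth_fun f" "rv f" and z: "zD (complex_of_real l) f a m" and nz: "(DL l ^^ m) f a \<noteq> 0"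
    and ab: "a < b" and pos: "\<And>t. a < t \<Longrightarrow> t < b \<Longrightarrow> Re (f t) \<ge> 0"
  shows "Re ((DL l ^^ m) f a) > 0"
proof (rule ccontr)
  assume "\<not> ?thesis"
  moreover have "Re ((DL l ^^ m) f a) \<noteq> 0"
    using nz rv_eq0[OF rv_Dlk[OF f(2,1)]] by blast
  ultimately have "Re ((DL l ^^ m) (\<lambda>x. - f x) a) > 0" by (simp add: Dlk_neg f)
  from TS[OF smooth_neg[OF f(1)] rv_neg[OF f(2)] _ this] z
  obtain \<epsilon> where e: "\<epsilon> > 0" "\<forall>t. a < t \<and> t < a + \<epsilon> \<longrightarrow> Re (- f t) > 0"
    by (auto simp: zD_neg f)
  obtain m where m: "0 < m" "m \<le> \<epsilon>" "m \<le> b - a" using e ab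
    by (intro that[of "min \<epsilon> (b - a)"]) auto
  define t where "t = a + m / 2"
  have "a < t" using m unfolding t_def by linarith
  moreover have "t < a + \<epsilon>" using m unfolding t_def by linarith
  moreover have "t < b" using m unfolding t_def by linarith
  ultimately show False using e pos[of t] by auto
qed

lemma sign_neg:
  assumes f: "smooth_fun f" "rv f" and z: "zD (complex_of_real l) f a m" and nz: "(DL l ^^ m) f a \<noteq> 0"
    and ab: "a < b" and neg: "\<And>t. a < t \<Longrightarrow> t < b \<Longrightarrow> Re (f t) \<le> 0"
  shows "Re ((DL l ^^ m) f a) < 0"
proof -
  have "Re ((DL l ^^ m) (\<lambda>x. - f x) a) > 0"
    by (rule sign_pos[OF smooth_neg[OF f(1)] rv_neg[OF f(2)] _ _ ab])
       (use z nz neg in \<open>auto simp: zD_neg f Dlk_neg\<close>)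
  then show ?thesis by (simp add: Dlk_neg f)
qed



lemma Dlk_sum: "finite K \<Longrightarrow> (\<And>k. k \<in> K \<Longrightarrow> smooth_fun (g k)) \<Longrightarrow>
   (Dl \<mu> ^^ i) (\<lambda>x. \<Sum>k\<in>K. c k * g k x) = (\<lambda>x. \<Sum>k\<in>K. c k * (Dl \<mu> ^^ i) (g k) x)"
proof (induction i)
  case 0 then show ?case by simp
next
  case (Suc i)
  then show ?case by (simp add: Dl_sum smooth_Dlk)
qed

lemma zD_sum: "finite K \<Longrightarrow> (\<And>k. k \<in> K \<Longrightarrow> smooth_fun (g k) \<and> zD \<mu> (g k) c m) \<Longrightarrow>
   zD \<mu> (\<lambda>x. \<Sum>k\<in>K. cf k * g k x) c m"
  unfolding zD_def by (subst Dlk_sum) auto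

lemma Dlk_zero: "(Dl \<mu> ^^ k) (\<lambda>x. 0) = (\<lambda>x. 0)"
proof (induction k)
  case (Suc k) then show ?case by (simp add: Dl_def Dv_zero)
qed simp

lemma zD_Suc2: "zD \<mu> f c (Suc m) \<longleftrightarrow> zD \<mu> f c m \<and> (Dl \<mu> ^^ m) f c = 0"
  unfolding zD_def by (auto simp: less_Suc_eq)

lemma zD_0: "zD \<mu> f c (Suc m) \<Longrightarrow> f c = 0"
  unfolding zD_def by (metis funpow_0 zero_less_Suc)

lemma Dl_add: "smooth_fun f \<Longrightarrow> smooth_fun g \<Longrightarrow> Dl \<mu> (\<lambda>x. f x + g x) = (\<lambda>x. Dl \<mu> f x + Dl \<mu> g x)"
  using Dl_lin[of f g \<mu> 1] by simp

lemma sum_split_lt: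
  fixes F :: "nat \<Rightarrow> 'a::comm_monoid_add"
  assumes "k \<le> N"
  shows "(\<Sum>j\<le>N. F j) = (\<Sum>j<k. F j) + (\<Sum>j\<in>{k..N}. F j)"
proof -
  have "{..N} = {..<k} \<union> {k..N}" using assms by auto
  moreover have "{..<k} \<inter> {k..N} = {}" by auto
  ultimately show ?thesis by (simp add: sum.union_disjoint)
qed

lemma sum_restrict_lt:
  fixes X :: "nat \<Rightarrow> complex"
  assumes "k \<le> Suc N"
  shows "(\<Sum>j\<le>N. complex_of_real (if j < k then c j else 0) * X j) = (\<Sum>j<k. complex_of_real (c j) * X j)"
proof -
  have "(\<Sum>j\<le>N. complex_of_real (if j < k then c j else 0) * X j) = (\<Sum>j\<le>N. if j < k then complex_of_real (c j) * X j else 0)"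
    by (rule sum.cong) auto
  also have "{..N} \<inter> {j. j < k} = {..<k}" using assms by auto
  then have "(\<Sum>j\<le>N. if j < k then complex_of_real (c j) * X j else 0) = (\<Sum>j<k. complex_of_real (c j) * X j)"
    by (simp add: sum.If_cases)
  finally show ?thesis .
qed

locale Gsetup =
  fixes l a b :: real and N :: nat and g :: "nat \<Rightarrow> real \<Rightarrow> complex" and \<gamma> :: "nat \<Rightarrow> real"
    and e :: "real \<Rightarrow> complex"
  assumes ab: "a < b"
    and gs: "\<And>k. k \<le> N \<Longrightarrow> smooth_fun (g k) \<and> rv (g k)"
    and gpos: "\<And>k t. k \<le> N \<Longrightarrow> a < t \<Longrightarrow> t < b \<Longrightarrow> Re (g k t) \<ge> 0"
    and gza: "\<And>k. k \<le> N \<Longrightarrow> zD (complex_of_real l) (g k) a k \<and> (DL l ^^ k) (g k) a \<noteq> 0"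
    and gzb: "\<And>k. k \<le> N \<Longrightarrow> zD (complex_of_real l) (g k) b (N - k)"
    and es: "smooth_fun e" and eD: "\<And>x. DL l e x = 0" and ea: "Re (e a) > 0"
    and eq: "\<And>x. e x = (\<Sum>k\<le>N. complex_of_real (\<gamma> k) * g k x)"
    and Ch: "\<And>\<beta> \<alpha> \<beta>' h t. h = (\<lambda>x. \<Sum>k\<le>N. complex_of_real (\<beta> k) * DL l (g k) x) \<Longrightarrow>
        zD (complex_of_real l) h a \<alpha> \<Longrightarrow> zD (complex_of_real l) h b \<beta>' \<Longrightarrow>
        (N \<le> \<alpha> + \<beta>' \<or> ((\<exists>c. a < c \<and> c < b \<and> h c = 0) \<and> N \<le> \<alpha> + \<beta>' + 1)) \<Longrightarrow>
        a \<le> t \<Longrightarrow> t \<le> b \<Longrightarrow> h t = 0"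
begin

definition S :: "nat \<Rightarrow> real \<Rightarrow> complex" where
  "S k = (\<lambda>x. \<Sum>j<k. complex_of_real (\<gamma> j) * g j x)"

definition H :: "nat \<Rightarrow> real \<Rightarrow> complex" where
  "H k = DL l (S k)"

lemma S_smooth: "k \<le> Suc N \<Longrightarrow> smooth_fun (S k)"
  unfolding S_def by (intro smooth_sum) (use gs in auto)

lemma S_rv: "k \<le> Suc N \<Longrightarrow> rv (S k)"
  unfolding S_def by (intro rv_sum) (use gs in auto)

lemma H_smooth: "k \<le> Suc N \<Longrightarrow> smooth_fun (H k)"
  unfolding H_def using S_smooth smooth_Dl by blast

lemma H_rv: "k \<le> Suc N \<Longrightarrow> rv (H k)"
  unfolding H_def using S_smooth S_rv rv_Dl by blast

lemma H_sum: "k \<le> Suc N \<Longrightarrow> H k = (\<lambda>x. \<Sum>j\<le>N. complex_of_real (if j < k then \<gamma> j else 0) * DL l (g j) x)"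
  unfolding H_def S_def
  by (subst Dl_sum) (use gs in \<open>auto simp: sum_restrict_lt\<close>)

lemma gsm: "k \<le> N \<Longrightarrow> smooth_fun (g k)" using gs by blast

definition R :: "nat \<Rightarrow> real \<Rightarrow> complex" where
  "R k = (\<lambda>x. \<Sum>j\<in>{k..N}. complex_of_real (\<gamma> j) * g j x)"

lemma R_smooth: "smooth_fun (R k)"
  unfolding R_def by (intro smooth_sum) (use gs in auto)

lemma e_split: "k \<le> N \<Longrightarrow> e x = S k x + R k x"
  unfolding eq S_def R_def by (rule sum_split_lt)

lemma H_negR: assumes "k \<le> N" shows "H k = (\<lambda>x. - DL l (R k) x)"
proof
  fix x
  have "e = (\<lambda>x. S k x + R k x)" using e_split[OF assms] by auto
  then have "DL l e = (\<lambda>x. DL l (S k) x + DL l (R k) x)"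
    using Dl_add[OF S_smooth R_smooth] assms by simp
  then have "DL l (S k) x + DL l (R k) x = 0" using eD[of x] by (simp add: fun_eq_iff)
  then show "H k x = - DL l (R k) x" unfolding H_def by (simp add: eq_neg_iff_add_eq_0)
qed

lemma R_za: "zD (complex_of_real l) (R k) a k"
  unfolding R_def
proof (intro zD_sum)
  fix j assume "j \<in> {k..N}"
  then show "smooth_fun (g j) \<and> zD (complex_of_real l) (g j) a k"
    using gs[of j] gza[of j] zD_mono[of _ "g j" a j k] by auto
qed auto

lemma S_zb: "k \<le> N \<Longrightarrow> zD (complex_of_real l) (S k) b (Suc (N - k))"
  unfolding S_def
proof (intro zD_sum)
  fix j assume "k \<le> N" "j \<in> {..<k}"
  then show "smooth_fun (g j) \<and> zD (complex_of_real l) (g j) b (Suc (N - k))"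
    using gs[of j] gzb[of j] zD_mono[of _ "g j" b "N - j" "Suc (N - k)"] by auto
qed auto

context
  fixes k assumes k1: "1 \<le> k" and kN: "k \<le> N"
begin

lemma H_zb: "zD (complex_of_real l) (H k) b (N - k)"
  using S_zb[OF kN] unfolding H_def zD_Suc by simp

lemma H_za: "zD (complex_of_real l) (H k) a (k - 1)"
proof -
  have "zD (complex_of_real l) (R k) a (Suc (k - 1))" using R_za k1 by simp
  then have "zD (complex_of_real l) (DL l (R k)) a (k - 1)" unfolding zD_Suc by simp
  then show ?thesis unfolding H_negR[OF kN] by (simp add: zD_neg smooth_Dl R_smooth)
qed

lemma S_a: "S k a = e a"
proof -
  have "R k a = 0" using R_za[of k] k1 by (cases k) (auto dest: zD_0)
  then show ?thesis using e_split[OF kN, of a] by simp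
qed

lemma S_b: "S k b = 0"
  using S_zb[OF kN] zD_0 by blast

lemma H_not0: "\<not> (\<forall>t. a \<le> t \<and> t \<le> b \<longrightarrow> H k t = 0)"
proof
  assume h: "\<forall>t. a \<le> t \<and> t \<le> b \<longrightarrow> H k t = 0"
  obtain z where z: "a < z" "z < b" and eqz: "exp (- l * b) * Re (S k b) - exp (- l * a) * Re (S k a) = (b - a) * (exp (- l * z) * Re (DL l (S k) z))"
    using mvtD[OF S_smooth[of k] ab, of l] kN by auto
  have "DL l (S k) z = 0" using h z unfolding H_def by auto
  then show False using eqz S_a S_b ea by simp
qed

lemma H_in_Ch: "H k = (\<lambda>x. \<Sum>j\<le>N. complex_of_real (if j < k then \<gamma> j else 0) * DL l (g j) x)"
  using H_sum kN by simp

lemma H_nozero: "a < c \<Longrightarrow> c < b \<Longrightarrow> H k c \<noteq> 0"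
proof
  assume c: "a < c" "c < b" "H k c = 0"
  have "\<forall>t. a \<le> t \<and> t \<le> b \<longrightarrow> H k t = 0"
    using Ch[OF H_in_Ch H_za H_zb] c k1 kN by auto
  then show False using H_not0 by blast
qed

lemma H_exact: "(DL l ^^ (k - 1)) (H k) a \<noteq> 0"
proof
  assume "(DL l ^^ (k - 1)) (H k) a = 0"
  moreover have "k = Suc (k - 1)" using k1 by simp
  ultimately have z: "zD (complex_of_real l) (H k) a k" using H_za zD_Suc2
    by metis
  have "\<forall>t. a \<le> t \<and> t \<le> b \<longrightarrow> H k t = 0"
    using Ch[OF H_in_Ch z H_zb] k1 kN by auto
  then show False using H_not0 by blast
qed

lemma H_neg: assumes t: "a < t" "t < b" shows "Re (H k t) < 0"
proof -
  have sm: "smooth_fun (H k)" and rvH: "rv (H k)" using H_smooth H_rv kN by auto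
  obtain z where z: "a < z" "z < b" and eqz: "exp (- l * b) * Re (S k b) - exp (- l * a) * Re (S k a) = (b - a) * (exp (- l * z) * Re (DL l (S k) z))"
    using mvtD[OF S_smooth[of k] ab, of l] kN by auto
  have "exp (- l * a) * Re (e a) > 0" using ea by simp
  then have "(b - a) * (exp (- l * z) * Re (H k z)) < 0"
    using eqz S_a S_b unfolding H_def by simp
  then have hz: "Re (H k z) < 0" using ab by (simp add: mult_less_0_iff)
  have cont: "continuous_on {x..y} (\<lambda>t. Re (H k t))" for x y
    by (intro continuous_at_imp_continuous_on ballI continuous_Re
        differentiable_imp_continuous_within smooth_diff[OF sm])
  show ?thesis
  proof (rule ccontr)
    assume "\<not> ?thesis"
    then have ht: "Re (H k t) \<ge> 0" by simp
    obtain w where w: "min z t \<le> w" "w \<le> max z t" "Re (H k w) = 0"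
    proof (cases "z \<le> t")
      case True
      from IVT'[where f="\<lambda>t. Re (H k t)" and a=z and y=0 and b=t, OF _ ht True cont] hz obtain w where "z \<le> w" "w \<le> t" "Re (H k w) = 0" by auto
      then show ?thesis using that True by auto
    next
      case False
      from IVT2'[where f="\<lambda>t. Re (H k t)" and a=t and y=0 and b=z, OF _ ht _ cont] hz False obtain w where "t \<le> w" "w \<le> z" "Re (H k w) = 0" by auto
      then show ?thesis using that False by auto
    qed
    have "a < w" "w < b" using w z t by auto
    moreover have "H k w = 0" using rv_eq0[OF rvH w(3)] .
    ultimately show False using H_nozero by blast
  qed
qed

end

lemma gamma_pos: assumes kN: "k \<le> N" shows "\<gamma> k > 0"
proof (cases "k = 0")
  case True
  have "e a = (\<Sum>j\<le>N. complex_of_real (\<gamma> j) * g j a)" by (rule eq)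
  also have "\<dots> = (\<Sum>j\<in>{0}. complex_of_real (\<gamma> j) * g j a)"
  proof (rule sum.mono_neutral_right)
    have "complex_of_real (\<gamma> i) * g i a = 0" if "i \<in> {..N} - {0}" for i
    proof -
      have "zD (complex_of_real l) (g i) a (Suc (i - 1))" using gza[of i] that by auto
      then show ?thesis by (auto dest: zD_0)
    qed
    then show "\<forall>i\<in>{..N} - {0}. complex_of_real (\<gamma> i) * g i a = 0" by blast
  qed auto
  finally have "Re (e a) = \<gamma> 0 * Re (g 0 a)" by simp

  moreover have "Re (g 0 a) > 0"
    using sign_pos[of "g 0" l a 0 b] gs[of 0] gza[of 0] gpos[of 0] ab by (auto simp: zD_def)
  ultimately show ?thesis using ea True by (simp add: zero_less_mult_iff)
next
  case False
  then have k1: "1 \<le> k" by simp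
  have gsm': "\<And>j. j \<in> {..N} \<Longrightarrow> smooth_fun (g j)" using gs by auto
  obtain k' where kk: "k = Suc k'" using k1 by (cases k) auto
  have "(DL l ^^ k) e = (DL l ^^ k') (DL l e)"
    unfolding kk by (rule Dlk_Suc)
  also have "DL l e = (\<lambda>x. 0)" using eD by auto
  also have "(DL l ^^ k') (\<lambda>x. 0) = (\<lambda>x. 0)" by (rule Dlk_zero)
  finally have e0: "(DL l ^^ k) e a = 0" by simp
  have eqf: "e = (\<lambda>x. \<Sum>j\<le>N. complex_of_real (\<gamma> j) * g j x)" using eq by auto
  have "(DL l ^^ k) e a = (\<Sum>j\<le>N. complex_of_real (\<gamma> j) * (DL l ^^ k) (g j) a)"
    unfolding eqf by (subst Dlk_sum) (use gsm' in auto)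
  also have "\<dots> = (\<Sum>j\<le>k. complex_of_real (\<gamma> j) * (DL l ^^ k) (g j) a)"
  proof (rule sum.mono_neutral_right)
    show "\<forall>i\<in>{..N} - {..k}. complex_of_real (\<gamma> i) * (DL l ^^ k) (g i) a = 0"
      using gza unfolding zD_def by auto
  qed (use kN in auto)
  also have "\<dots> = (\<Sum>j<k. complex_of_real (\<gamma> j) * (DL l ^^ k) (g j) a) + complex_of_real (\<gamma> k) * (DL l ^^ k) (g k) a"
    by (simp add: lessThan_Suc_atMost[symmetric])
  also have "(\<Sum>j<k. complex_of_real (\<gamma> j) * (DL l ^^ k) (g j) a) = (DL l ^^ k) (S k) a"
    unfolding S_def by (subst Dlk_sum) (use gs kN in auto)
  also have "(DL l ^^ k) (S k) a = (DL l ^^ (k - 1)) (H k) a"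
    unfolding H_def kk by (simp add: Dlk_Suc del: funpow.simps)
  finally have id: "complex_of_real (\<gamma> k) * (DL l ^^ k) (g k) a = - (DL l ^^ (k - 1)) (H k) a"
    using e0 by (simp add: eq_neg_iff_add_eq_0 add.commute)
  have "Re ((DL l ^^ (k - 1)) (H k) a) < 0"
    by (rule sign_neg[OF H_smooth H_rv H_za[OF k1 kN] H_exact[OF k1 kN] ab])
       (use kN H_neg[OF k1 kN] in \<open>auto simp: less_imp_le\<close>)
  moreover have "Re ((DL l ^^ k) (g k) a) > 0"
    using sign_pos[of "g k" l a k b] gs[OF kN] gza[OF kN] gpos[OF kN] ab by auto
  moreover have "\<gamma> k * Re ((DL l ^^ k) (g k) a) = - Re ((DL l ^^ (k - 1)) (H k) a)"
    using arg_cong[OF id, of Re] by simp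
  ultimately have "\<gamma> k * Re ((DL l ^^ k) (g k) a) > 0" "Re ((DL l ^^ k) (g k) a) > 0" by linarith+
  then show ?thesis by (simp add: zero_less_mult_iff)
qed

end



definition ce :: "complex \<Rightarrow> complex \<Rightarrow> complex \<Rightarrow> real \<Rightarrow> complex" where
  "ce A B c = (\<lambda>x. (A * complex_of_real x + B) * exp (c * complex_of_real x))"

lemma ce_deriv: "(ce A B c has_vector_derivative (((c * A) * complex_of_real x + (A + c * B)) * exp (c * complex_of_real x))) (at x)"
proof -
  have "((\<lambda>z. (A * z + B) * exp (c * z)) has_field_derivative (((c * A) * complex_of_real x + (A + c * B)) * exp (c * complex_of_real x))) (at (complex_of_real x))"
    by (auto intro!: derivative_eq_intros simp: algebra_simps)
  from has_vector_derivative_real_field[OF this, where s=UNIV] show ?thesis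
    by (simp add: ce_def)
qed

lemma Dv_ce: "Dv (ce A B c) = ce (c * A) (A + c * B) c"
proof
  fix x
  have "ce (c * A) (A + c * B) c x = ((c * A) * complex_of_real x + (A + c * B)) * exp (c * complex_of_real x)"
    by (simp add: ce_def)
  then show "Dv (ce A B c) x = ce (c * A) (A + c * B) c x" using Dv_at[OF ce_deriv] by simp
qed

lemma smooth_ce: "smooth_fun (ce A B c)"
proof -
  have "\<exists>A' B'. (Dv ^^ k) (ce A B c) = ce A' B' c" for k
  proof (induction k)
    case 0 then show ?case by auto
  next
    case (Suc k)
    then obtain A' B' where "(Dv ^^ k) (ce A B c) = ce A' B' c" by auto
    then show ?case by (auto simp: Dv_ce)
  qed
  then show ?thesis unfolding smooth_fun_def
    by (metis ce_deriv differentiableI_vector)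
qed

lemma Dl_ce: "Dl \<mu> (ce A B c) = ce ((c - \<mu>) * A) (A + (c - \<mu>) * B) c"
  unfolding Dl_def Dv_ce by (auto simp: ce_def algebra_simps)

lemma Lop_ce: "\<exists>A' B'. Lop \<mu>s (ce A B c) = ce A' B' c"
proof (induction \<mu>s)
  case Nil then show ?case by auto
next
  case (Cons \<mu> \<mu>s)
  then obtain A' B' where "Lop \<mu>s (ce A B c) = ce A' B' c" by auto
  then show ?case by (auto simp: Lop_Cons Dl_ce)
qed

lemma ce_E: "ce A B c \<in> Espace (c # c # \<mu>s)"
proof -
  obtain A' B' where L: "Lop \<mu>s (ce A B c) = ce A' B' c" using Lop_ce by blast
  have "Lop (c # c # \<mu>s) (ce A B c) = ce 0 0 c" by (simp add: Lop_Cons L Dl_ce)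
  then show ?thesis unfolding Espace_def using smooth_ce[of A B c] by (simp add: ce_def)
qed

lemma ce_val: "ce A B (complex_of_real l) x = (A * complex_of_real x + B) * complex_of_real (exp (l * x))"
  by (simp add: ce_def exp_of_real[symmetric])

lemma realify:
  assumes f: "rv f" and g: "\<And>k. k \<in> K \<Longrightarrow> rv (g k)" and eq: "f x = (\<Sum>k\<in>K. \<beta> k * g k x)"
  shows "f x = (\<Sum>k\<in>K. complex_of_real (Re (\<beta> k)) * g k x)"
proof (rule complex_eqI)
  have "Re (f x) = (\<Sum>k\<in>K. Re (\<beta> k * g k x))" using eq by (simp add: Re_sum)
  also have "\<dots> = (\<Sum>k\<in>K. Re (complex_of_real (Re (\<beta> k)) * g k x))"
    by (rule sum.cong) (use g in \<open>auto simp: rv_def\<close>)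
  finally show "Re (f x) = Re (\<Sum>k\<in>K. complex_of_real (Re (\<beta> k)) * g k x)" by (simp add: Re_sum)
  show "Im (f x) = Im (\<Sum>k\<in>K. complex_of_real (Re (\<beta> k)) * g k x)"
    using f g by (auto simp: rv_def Im_sum intro!: sum.neutral)
qed

lemma Dv_zero_ivl:
  assumes g: "g differentiable (at x)" and x: "a \<le> x" "x \<le> b" and ab: "a < b"
    and z: "\<And>y. a \<le> y \<Longrightarrow> y \<le> b \<Longrightarrow> g y = 0"
  shows "Dv g x = 0"
proof -
  have D1: "(g has_vector_derivative Dv g x) (at x within cbox a b)"
    by (rule has_vector_derivative_at_within[OF Dv_works[OF g]])
  have D2: "(g has_vector_derivative 0) (at x within cbox a b)"
    by (rule has_vector_derivative_transform[of x "cbox a b" g "\<lambda>x. 0"]) (use x z in \<open>auto intro: derivative_intros\<close>)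
  show ?thesis
    by (rule vector_derivative_unique_within_closed_interval[OF ab _ D1 D2]) (use x in auto)
qed

lemma Dvk_zero_ivl:
  assumes g: "smooth_fun g" and ab: "a < b"
    and z: "\<And>y. a \<le> y \<Longrightarrow> y \<le> b \<Longrightarrow> g y = 0"
  shows "a \<le> x \<Longrightarrow> x \<le> b \<Longrightarrow> (Dv ^^ j) g x = 0"
proof (induction j arbitrary: x)
  case 0 then show ?case using z by simp
next
  case (Suc j)
  have "(Dv ^^ Suc j) g x = Dv ((Dv ^^ j) g) x" by simp
  also have "\<dots> = 0"
    by (rule Dv_zero_ivl[OF smooth_Dvk_diff[OF g] Suc.prems ab Suc.IH])
  finally show ?case .
qed

lemma linind:
  assumes ps: "\<And>k. k \<le> n \<Longrightarrow> smooth_fun (p k)"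
    and zo: "\<And>k. k \<le> n \<Longrightarrow> zero_of_order_ge (p k) a k \<and> (Dv ^^ k) (p k) a \<noteq> 0"
    and ab: "a < b"
    and z: "\<And>x. a \<le> x \<Longrightarrow> x \<le> b \<Longrightarrow> (\<Sum>k\<le>n. \<beta> k * p k x) = 0"
  shows "\<forall>k\<le>n. \<beta> k = 0"
proof -
  have sm: "smooth_fun (\<lambda>x. \<Sum>k\<le>n. \<beta> k * p k x)" by (rule smooth_sum) (use ps in auto)
  have D: "(\<Sum>i\<le>n. \<beta> i * (Dv ^^ j) (p i) a) = 0" for j
  proof -
    have "(Dv ^^ j) (\<lambda>x. \<Sum>k\<le>n. \<beta> k * p k x) a = 0"
      by (rule Dvk_zero_ivl[OF sm ab z]) (use ab in auto)
    then show ?thesis by (subst (asm) Dvk_sum) (use ps in auto)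
  qed
  show ?thesis
  proof (intro allI impI)
    fix k assume "k \<le> n"
    then show "\<beta> k = 0"
    proof (induction k rule: less_induct)
      case (less k)
      have "(\<Sum>i\<le>n. \<beta> i * (Dv ^^ k) (p i) a) = (\<Sum>i\<in>{k}. \<beta> i * (Dv ^^ k) (p i) a)"
      proof (rule sum.mono_neutral_right)
        have "\<beta> i * (Dv ^^ k) (p i) a = 0" if "i \<in> {..n} - {k}" for i
        proof (cases "i < k")
          case True then show ?thesis using less.IH[of i] less.prems by simp
        next
          case False
          then have "k < i" using that by auto
          then show ?thesis using zo[of i] that unfolding zero_of_order_ge_def by auto
        qed
        then show "\<forall>i\<in>{..n} - {k}. \<beta> i * (Dv ^^ k) (p i) a = 0" by blast
      qed (use less.prems in auto)
      then have "\<beta> k * (Dv ^^ k) (p k) a = 0" using D[of k] by simp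
      then show ?case using zo[OF less.prems] by simp
    qed
  qed
qed

lemma Fcheb:
  assumes u: "u \<in> Espace ls" and ch: "ext_chebyshev (Espace ls) (int n - 2) a b"
    and n1: "n \<ge> 1" and ab: "a < b"
    and za: "zD \<mu> u a \<alpha>" and zb: "zD \<mu> u b \<beta>"
    and C: "finite C" "C \<subseteq> {a<..<b}" "\<And>c. c \<in> C \<Longrightarrow> u c = 0"
    and cnt: "n - 1 \<le> \<alpha> + \<beta> + card C"
    and t: "a \<le> t" "t \<le> b"
  shows "u t = 0"
proof (rule ccontr)
  assume ut: "u t \<noteq> 0"
  have us: "smooth_fun u" using u by (simp add: Espace_def)
  define S where "S = insert a (insert b C)"
  define m where "m = (\<lambda>x. if x = a then \<alpha> else if x = b then \<beta> else (1::nat))"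
  have fin: "finite S" "S \<subseteq> {a..b}" using C ab by (auto simp: S_def)
  have zs: "\<forall>c\<in>S. zero_of_order_ge u c (m c)"
  proof
    fix c assume "c \<in> S"
    then consider "c = a" | "c = b" | "c \<in> C" "c \<noteq> a" "c \<noteq> b" unfolding S_def by auto
    then show "zero_of_order_ge u c (m c)"
    proof cases
      case 1 then show ?thesis using za zog_zD[OF us] by (simp add: m_def)
    next
      case 2 then show ?thesis using zb zog_zD[OF us] ab by (simp add: m_def)
    next
      case 3 then show ?thesis using C(3)[of c] by (simp add: m_def zero_of_order_ge_def)
    qed
  qed
  have "sum m S = \<alpha> + \<beta> + card C"
  proof -
    have aC: "a \<notin> insert b C" "b \<notin> C" using C ab by auto
    have "sum m C = sum (\<lambda>_. 1) C" by (rule sum.cong) (use C ab in \<open>auto simp: m_def\<close>)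
    then show ?thesis unfolding S_def using aC C ab by (simp add: m_def)
  qed
  moreover have "int (sum m S) \<le> int n - 2"
  proof -
    have "\<exists>x\<in>{a..b}. u x \<noteq> 0" using ut t by auto
    then have "\<forall>S mult. finite S \<and> S \<subseteq> {a..b} \<and> (\<forall>c\<in>S. zero_of_order_ge u c (mult c))
            \<longrightarrow> int (\<Sum>c\<in>S. mult c) \<le> int n - 2"
      using ch u unfolding ext_chebyshev_def by blast
    then show ?thesis using fin zs by blast
  qed
  ultimately show False using cnt n1 by linarith
qed

lemma Dl2_F:
  assumes Q: "Q \<in> Espace (c # c # ls)"
  shows "Dl c (Dl c Q) \<in> Espace ls"
proof -
  have Qs: "smooth_fun Q" and L: "\<And>x. Lop (c # c # ls) Q x = 0" using Q by (auto simp: Espace_def)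
  have "Lop ls (Dl c (Dl c Q)) = Lop (c # c # ls) Q"
    by (simp add: Lop_Cons Lop_Dl Qs smooth_Dl)
  then show ?thesis using L by (simp add: Espace_def smooth_Dl Qs)
qed



lemma zD_D: "zD \<mu> f c m \<Longrightarrow> zD \<mu> (Dl \<mu> f) c (m - 1)"
  by (cases m) (simp add: zD_def, simp add: zD_Suc)

lemma ChF:
  assumes u: "h \<in> Espace ls" and ch: "ext_chebyshev (Espace ls) (int n - 2) a b"
    and n1: "n \<ge> 1" and ab: "a < b"
    and za: "zD \<mu> h a \<alpha>" and zb: "zD \<mu> h b \<beta>"
    and cond: "n - 1 \<le> \<alpha> + \<beta> \<or> ((\<exists>c. a < c \<and> c < b \<and> h c = 0) \<and> n - 1 \<le> \<alpha> + \<beta> + 1)"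
    and t: "a \<le> t" "t \<le> b"
  shows "h t = 0"
  using cond
proof
  assume "n - 1 \<le> \<alpha> + \<beta>"
  then have cX: "n - 1 \<le> \<alpha> + \<beta> + card {}" by simp
  show ?thesis by (rule Fcheb[OF u ch n1 ab za zb _ _ _ cX t]) auto
next
  assume "(\<exists>c. a < c \<and> c < b \<and> h c = 0) \<and> n - 1 \<le> \<alpha> + \<beta> + 1"
  then obtain c where c: "a < c" "c < b" "h c = 0" and cnt: "n - 1 \<le> \<alpha> + \<beta> + 1" by blast
  have cX: "n - 1 \<le> \<alpha> + \<beta> + card {c}" using cnt by simp
  show ?thesis by (rule Fcheb[OF u ch n1 ab za zb _ _ _ cX t]) (use c in auto)
qed

lemma ChFromF:
  assumes hs: "smooth_fun h" and hrv: "rv h" and uF: "DL l h \<in> Espace ls"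
    and ch: "ext_chebyshev (Espace ls) (int n - 2) a b"
    and n1: "n \<ge> 1" and ab: "a < b"
    and za: "zD (complex_of_real l) h a \<alpha>" and zb: "zD (complex_of_real l) h b \<beta>"
    and cond: "n \<le> \<alpha> + \<beta> \<or> ((\<exists>c. a < c \<and> c < b \<and> h c = 0) \<and> n \<le> \<alpha> + \<beta> + 1)"
    and t: "a \<le> t" "t \<le> b"
  shows "h t = 0"
proof -
  have zua: "zD (complex_of_real l) (DL l h) a (\<alpha> - 1)" using zD_D[OF za] .
  have zub: "zD (complex_of_real l) (DL l h) b (\<beta> - 1)" using zD_D[OF zb] .
  have ha: "\<alpha> \<ge> 1 \<Longrightarrow> h a = 0" using za by (cases \<alpha>) (auto dest: zD_0)
  have hb: "\<beta> \<ge> 1 \<Longrightarrow> h b = 0" using zb by (cases \<beta>) (auto dest: zD_0)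
  from cond show ?thesis
  proof
    assume cnt: "n \<le> \<alpha> + \<beta>"
    have u0: "DL l h y = 0" if "a \<le> y" "y \<le> b" for y
    proof (cases "\<alpha> \<ge> 1 \<and> \<beta> \<ge> 1")
      case True
      obtain c1 where c1: "a < c1" "c1 < b" "DL l h c1 = 0"
        using rolleD[OF hs hrv ab ha hb] True by blast
      have cX: "n - 1 \<le> \<alpha> - 1 + (\<beta> - 1) + card {c1}" using cnt True by simp
      show ?thesis by (rule Fcheb[OF uF ch n1 ab zua zub _ _ _ cX that]) (use c1 in auto)
    next
      case False
      have cX: "n - 1 \<le> \<alpha> - 1 + (\<beta> - 1) + card {}" using cnt False by auto
      show ?thesis by (rule Fcheb[OF uF ch n1 ab zua zub _ _ _ cX that]) auto
    qed
    show ?thesis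
    proof (cases "\<alpha> \<ge> 1")
      case True
      show ?thesis by (rule constD[OF hs hrv u0 _ _ ha[OF True] t]) (use ab in auto)
    next
      case False
      then have "\<beta> \<ge> 1" using cnt n1 by auto
      show ?thesis by (rule constD[OF hs hrv u0 _ _ hb[OF \<open>\<beta> \<ge> 1\<close>] t]) (use ab in auto)
    qed
  next
    assume "(\<exists>c. a < c \<and> c < b \<and> h c = 0) \<and> n \<le> \<alpha> + \<beta> + 1"
    then obtain c where c: "a < c" "c < b" "h c = 0" and cnt: "n \<le> \<alpha> + \<beta> + 1" by blast
    obtain A1 where A1: "A1 \<subseteq> {a<..<c}" "finite A1" "\<And>x. x \<in> A1 \<Longrightarrow> DL l h x = 0" "\<alpha> \<le> (\<alpha> - 1) + card A1"
    proof (cases "\<alpha> \<ge> 1")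
      case True
      obtain c1 where "a < c1" "c1 < c" "DL l h c1 = 0"
        using rolleD[OF hs hrv c(1) ha[OF True] c(3)] by blast
      then show ?thesis using that[of "{c1}"] True by auto
    next
      case False then show ?thesis using that[of "{}"] by auto
    qed
    obtain A2 where A2: "A2 \<subseteq> {c<..<b}" "finite A2" "\<And>x. x \<in> A2 \<Longrightarrow> DL l h x = 0" "\<beta> \<le> (\<beta> - 1) + card A2"
    proof (cases "\<beta> \<ge> 1")
      case True
      obtain c2 where "c < c2" "c2 < b" "DL l h c2 = 0"
        using rolleD[OF hs hrv c(2) c(3) hb[OF True]] by blast
      then show ?thesis using that[of "{c2}"] True by auto
    next
      case False then show ?thesis using that[of "{}"] by auto
    qed
    have "\<forall>x\<in>A1. x < c" "\<forall>x\<in>A2. c < x" using A1(1) A2(1) by auto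
    then have disj: "A1 \<inter> A2 = {}" by force
    have cardU: "card (A1 \<union> A2) = card A1 + card A2" using card_Un_disjoint[OF A1(2) A2(2) disj] .
    have cnt2: "n - 1 \<le> \<alpha> - 1 + (\<beta> - 1) + card (A1 \<union> A2)" using cnt cardU A1(4) A2(4) by linarith
    have sub: "A1 \<union> A2 \<subseteq> {a<..<b}" using A1(1) A2(1) c by auto
    have z0: "\<And>x. x \<in> A1 \<union> A2 \<Longrightarrow> DL l h x = 0" using A1(3) A2(3) by blast
    have u0: "DL l h y = 0" if "a \<le> y" "y \<le> b" for y
      by (rule Fcheb[OF uF ch n1 ab zua zub _ sub z0 cnt2 that]) (use A1(2) A2(2) in simp)
    show ?thesis by (rule constD[OF hs hrv u0 _ _ c(3) t]) (use c in auto)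
  qed
qed

lemma sbp_gen:
  fixes \<tau> :: "nat \<Rightarrow> real" and h :: "nat \<Rightarrow> complex"
  shows "(\<Sum>k\<le>n. complex_of_real (\<tau> k) * (h (Suc k) - h k)) =
     complex_of_real (\<tau> n) * h (Suc n) - complex_of_real (\<tau> 0) * h 0
     - (\<Sum>j<n. complex_of_real (\<tau> (Suc j) - \<tau> j) * h (Suc j))"
proof (induction n)
  case 0 then show ?case by (simp add: algebra_simps)
next
  case (Suc n)
  define s where "s = (\<Sum>j<n. complex_of_real (\<tau> (Suc j) - \<tau> j) * h (Suc j))"
  have "(\<Sum>k\<le>Suc n. complex_of_real (\<tau> k) * (h (Suc k) - h k)) =
     (complex_of_real (\<tau> n) * h (Suc n) - complex_of_real (\<tau> 0) * h 0 - s) + complex_of_real (\<tau> (Suc n)) * (h (Suc (Suc n)) - h (Suc n))"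
    using Suc.IH by (simp add: s_def)
  also have "\<dots> = complex_of_real (\<tau> (Suc n)) * h (Suc (Suc n)) - complex_of_real (\<tau> 0) * h 0
     - (s + (complex_of_real (\<tau> (Suc n)) - complex_of_real (\<tau> n)) * h (Suc n))"
    by algebra
  also have "s + (complex_of_real (\<tau> (Suc n)) - complex_of_real (\<tau> n)) * h (Suc n) = (\<Sum>j<Suc n. complex_of_real (\<tau> (Suc j) - \<tau> j) * h (Suc j))"
    by (simp add: s_def)
  finally show ?case .
qed

lemma sbp:
  fixes \<tau> :: "nat \<Rightarrow> real" and h :: "nat \<Rightarrow> complex"
  assumes "h 0 = 0" "h (Suc n) = 0"
  shows "(\<Sum>k\<le>n. complex_of_real (\<tau> k) * (h (Suc k) - h k)) =
     (\<Sum>j<n. complex_of_real (\<tau> (Suc j) - \<tau> j) * (- h (Suc j)))"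
  unfolding sbp_gen using assms by (simp add: sum_negf)



theorem theorem10:
  fixes lam0 :: real and ls :: "complex list" and n :: nat and a b :: real
    and p :: "nat \<Rightarrow> real \<Rightarrow> complex"
  assumes "n \<ge> 1" and "length ls = n - 1" and "a < b"
    and "ext_chebyshev (Espace ls) (int n - 2) a b"
    and "closed_under_cnj (Espace ls)"
    and "bernstein_basis (Espace (complex_of_real lam0 # complex_of_real lam0 # ls)) n a b p"
    and "\<forall>k\<le>n. \<forall>x. Im (p k x) = 0"
    and "\<forall>k\<le>n. \<forall>x\<in>{a..b}. Re (p k x) \<ge> 0"
  shows "\<exists>t \<alpha> :: nat \<Rightarrow> real.
     ((\<forall>k\<le>n. t k \<in> {a..b} \<and> \<alpha> k > 0) \<and>
      (\<forall>x\<in>{a..b}. (\<Sum>k\<le>n. complex_of_real (exp (lam0 * t k) * \<alpha> k) * p k x)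
                    = complex_of_real (exp (lam0 * x))) \<and>
      (\<forall>x\<in>{a..b}. (\<Sum>k\<le>n. complex_of_real (t k * exp (lam0 * t k) * \<alpha> k) * p k x)
                    = complex_of_real (x * exp (lam0 * x)))) \<and>
     (\<forall>t' \<alpha>' :: nat \<Rightarrow> real.
        ((\<forall>k\<le>n. t' k \<in> {a..b} \<and> \<alpha>' k > 0) \<and>
         (\<forall>x\<in>{a..b}. (\<Sum>k\<le>n. complex_of_real (exp (lam0 * t' k) * \<alpha>' k) * p k x)
                       = complex_of_real (exp (lam0 * x))) \<and>
         (\<forall>x\<in>{a..b}. (\<Sum>k\<le>n. complex_of_real (t' k * exp (lam0 * t' k) * \<alpha>' k) * p k x)
                       = complex_of_real (x * exp (lam0 * x))))
        \<longrightarrow> (\<forall>k\<le>n. t' k = t k \<and> \<alpha>' k = \<alpha> k))"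
proof -
  note n1 = assms(1) and ab = assms(3) and ch = assms(4)
  define L where "L = complex_of_real lam0 # complex_of_real lam0 # ls"
  have lenL: "length L = Suc n" using assms(1,2) by (simp add: L_def)
  have pB: "p k \<in> Espace L \<and> zero_of_order (p k) a k \<and> zero_of_order (p k) b (n - k)" if "k \<le> n" for k
    using assms(6) that unfolding bernstein_basis_def L_def by blast
  have pE: "\<And>k. k \<le> n \<Longrightarrow> p k \<in> Espace L" using pB by blast
  have psm: "\<And>k. k \<le> n \<Longrightarrow> smooth_fun (p k)" using pB by (simp add: Espace_def)
  have prv: "\<And>k. k \<le> n \<Longrightarrow> rv (p k)" using assms(7) by (simp add: rv_def)
  have pzo: "\<And>k. k \<le> n \<Longrightarrow> zero_of_order_ge (p k) a k \<and> (Dv ^^ k) (p k) a \<noteq> 0"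
    using pB by (simp add: zero_of_order_def)
  have pzob: "\<And>k. k \<le> n \<Longrightarrow> zero_of_order_ge (p k) b (n - k) \<and> (Dv ^^ (n - k)) (p k) b \<noteq> 0"
    using pB by (simp add: zero_of_order_def)
  have pza: "\<And>k. k \<le> n \<Longrightarrow> zD (complex_of_real lam0) (p k) a k \<and> (DL lam0 ^^ k) (p k) a \<noteq> 0"
    using pzo zog_zD psm Dlk_exact by metis
  have pzb: "\<And>k. k \<le> n \<Longrightarrow> zD (complex_of_real lam0) (p k) b (n - k)"
    using pzob zog_zD psm by metis
  have ppos: "\<And>k t. k \<le> n \<Longrightarrow> a < t \<Longrightarrow> t < b \<Longrightarrow> Re (p k t) \<ge> 0"
    using assms(8) by auto
  have pa0: "p k a = 0" if "1 \<le> k" "k \<le> n" for k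
    using pzo[OF that(2)] that(1) unfolding zero_of_order_ge_def by (metis funpow_0 less_le_trans zero_less_one)
  have pb0: "p k b = 0" if "k < n" for k
    using pzob[of k] that unfolding zero_of_order_ge_def by (metis funpow_0 less_imp_le zero_less_diff)
  have p0a: "p 0 a \<noteq> 0" using pzo[of 0] by simp
  have pnb: "p n b \<noteq> 0" using pzob[of n] by simp
  have eval_a: "(\<Sum>k\<le>n. \<beta> k * p k a) = \<beta> 0 * p 0 a" for \<beta>
  proof -
    have "(\<Sum>k\<le>n. \<beta> k * p k a) = (\<Sum>k\<in>{0}. \<beta> k * p k a)"
      by (rule sum.mono_neutral_right) (use pa0 in auto)
    then show ?thesis by simp
  qed
  have eval_b: "(\<Sum>k\<le>n. \<beta> k * p k b) = \<beta> n * p n b" for \<beta>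
  proof -
    have "(\<Sum>k\<le>n. \<beta> k * p k b) = (\<Sum>k\<in>{n}. \<beta> k * p k b)"
      by (rule sum.mono_neutral_right) (use pb0 in auto)
    then show ?thesis by simp
  qed
  define e where "e = ce 0 1 (complex_of_real lam0)"
  define xa where "xa = ce 1 (- complex_of_real a) (complex_of_real lam0)"
  have e_val: "\<And>x. e x = complex_of_real (exp (lam0 * x))" by (simp add: e_def ce_val)
  have xa_val: "\<And>x. xa x = complex_of_real ((x - a) * exp (lam0 * x))" by (simp add: xa_def ce_val)
  have eE: "e \<in> Espace L" unfolding e_def L_def by (rule ce_E)
  have xaE: "xa \<in> Espace L" unfolding xa_def L_def by (rule ce_E)
  have es: "smooth_fun e" using eE by (simp add: Espace_def)
  have erv: "rv e" by (simp add: rv_def e_val)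
  have xarv: "rv xa" by (simp add: rv_def xa_val)
  have eD0: "DL lam0 e = ce 0 0 (complex_of_real lam0)" unfolding e_def by (subst Dl_ce) simp
  have eD: "\<And>x. DL lam0 e x = 0" by (simp add: eD0 ce_def)
  have xaD: "DL lam0 xa = e" unfolding xa_def e_def by (subst Dl_ce) simp
  have ea: "Re (e a) > 0" by (simp add: e_val)
  obtain \<beta>1 where b1: "\<forall>x. e x = (\<Sum>k\<le>n. \<beta>1 k * p k x)" using expand[OF pE lenL pzo eE] by blast
  define c where "c = (\<lambda>k. Re (\<beta>1 k))"
  have ceq: "\<And>x. e x = (\<Sum>k\<le>n. complex_of_real (c k) * p k x)"
    unfolding c_def by (rule realify[OF erv]) (use prv b1 in auto)
  obtain \<beta>2 where b2: "\<forall>x. xa x = (\<Sum>k\<le>n. \<beta>2 k * p k x)" using expand[OF pE lenL pzo xaE] by blast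
  define \<epsilon> where "\<epsilon> = (\<lambda>k. Re (\<beta>2 k))"
  have xeq: "\<And>x. xa x = (\<Sum>k\<le>n. complex_of_real (\<epsilon> k) * p k x)"
    unfolding \<epsilon>_def by (rule realify[OF xarv]) (use prv b2 in auto)
  have Ch1: "h t = 0" if hdef: "h = (\<lambda>x. \<Sum>k\<le>n. complex_of_real (\<beta> k) * DL lam0 (p k) x)"
    and za: "zD (complex_of_real lam0) h a \<alpha>" and zb: "zD (complex_of_real lam0) h b \<beta>'"
    and cond: "n \<le> \<alpha> + \<beta>' \<or> ((\<exists>c. a < c \<and> c < b \<and> h c = 0) \<and> n \<le> \<alpha> + \<beta>' + 1)"
    and t: "a \<le> t" "t \<le> b" for \<beta> \<alpha> \<beta>' h t
  proof -
    define Q where "Q = (\<lambda>x. \<Sum>k\<le>n. complex_of_real (\<beta> k) * p k x)"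
    have QE: "Q \<in> Espace L" unfolding Q_def by (rule Espace_sum) (use pE in auto)
    have Qs: "smooth_fun Q" using QE by (simp add: Espace_def)
    have Qrv: "rv Q" unfolding Q_def by (rule rv_sum) (use prv in auto)
    have hQ: "h = DL lam0 Q" unfolding hdef Q_def by (subst Dl_sum) (use psm in auto)
    have hs: "smooth_fun h" unfolding hQ by (rule smooth_Dl[OF Qs])
    have hrv: "rv h" unfolding hQ by (rule rv_Dl[OF Qrv Qs])
    have uF: "DL lam0 h \<in> Espace ls" unfolding hQ by (rule Dl2_F) (use QE in \<open>simp add: L_def\<close>)
    show ?thesis by (rule ChFromF[OF hs hrv uF ch n1 ab za zb cond t])
  qed
  interpret G1: Gsetup lam0 a b n p c e
  proof (unfold_locales)
    show "a < b" by (rule ab)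
    show "\<And>k. k \<le> n \<Longrightarrow> smooth_fun (p k) \<and> rv (p k)" using psm prv by blast
    show "\<And>k t. k \<le> n \<Longrightarrow> a < t \<Longrightarrow> t < b \<Longrightarrow> 0 \<le> Re (p k t)" by (rule ppos)
    show "\<And>k. k \<le> n \<Longrightarrow> zD (complex_of_real lam0) (p k) a k \<and> (DL lam0 ^^ k) (p k) a \<noteq> 0" by (rule pza)
    show "\<And>k. k \<le> n \<Longrightarrow> zD (complex_of_real lam0) (p k) b (n - k)" by (rule pzb)
    show "smooth_fun e" by (rule es)
    show "\<And>x. DL lam0 e x = 0" by (rule eD)
    show "0 < Re (e a)" by (rule ea)
    show "\<And>x. e x = (\<Sum>k\<le>n. complex_of_real (c k) * p k x)" by (rule ceq)
  qed (rule Ch1, assumption+)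

  have cpos: "\<And>k. k \<le> n \<Longrightarrow> c k > 0" using G1.gamma_pos by blast
  define \<tau> where "\<tau> = (\<lambda>k. \<epsilon> k / c k)"
  have eps_tau: "\<epsilon> k = \<tau> k * c k" if "k \<le> n" for k
  proof -
    have "c k \<noteq> 0" using cpos[OF that] by simp
    then show ?thesis by (simp add: \<tau>_def)
  qed
  have eps0: "\<epsilon> 0 = 0"
  proof -
    have "complex_of_real (\<epsilon> 0) * p 0 a = 0" using xeq[of a] xa_val[of a] eval_a by simp
    then show ?thesis using p0a by simp
  qed
  have epsn: "\<epsilon> n = (b - a) * c n"
  proof -
    have 1: "complex_of_real (\<epsilon> n) * p n b = complex_of_real ((b - a) * exp (lam0 * b))"
      using xeq[of b] xa_val[of b] eval_b by simp
    have 2: "complex_of_real (c n) * p n b = complex_of_real (exp (lam0 * b))"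
      using ceq[of b] e_val[of b] eval_b by simp
    have "complex_of_real (\<epsilon> n) * p n b = complex_of_real ((b - a) * c n) * p n b"
      using 1 2 by (simp add: algebra_simps)
    then have "complex_of_real (\<epsilon> n) = complex_of_real ((b - a) * c n)" using pnb by simp
    then show ?thesis by (rule of_real_eq_iff[THEN iffD1])
  qed
  have tau0: "\<tau> 0 = 0" by (simp add: \<tau>_def eps0)
  have taun: "\<tau> n = b - a" using cpos[of n] by (simp add: \<tau>_def epsn)
  have S_E: "G1.S k \<in> Espace L" if "k \<le> Suc n" for k
    unfolding G1.S_def by (rule Espace_sum) (use pE that in auto)
  have S_Suc: "G1.S (Suc k) = (\<lambda>x. complex_of_real (c k) * p k x + G1.S k x)" for k
    by (rule ext) (simp add: G1.S_def add.commute)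
  have Hstep: "complex_of_real (c k) * DL lam0 (p k) x = G1.H (Suc k) x - G1.H k x" if "k \<le> n" for k x
  proof -
    have "G1.H (Suc k) = (\<lambda>x. complex_of_real (c k) * DL lam0 (p k) x + DL lam0 (G1.S k) x)"
      unfolding G1.H_def S_Suc by (rule Dl_lin[OF psm[OF that] G1.S_smooth]) (use that in simp)
    then show ?thesis by (simp add: G1.H_def)
  qed
  have H0: "G1.H 0 x = 0" for x
  proof -
    have "G1.S 0 = (\<lambda>x. 0)" by (simp add: G1.S_def)
    then show ?thesis by (simp add: G1.H_def Dl_def Dv_zero)
  qed
  have HSn: "G1.H (Suc n) x = 0" for x
  proof -
    have "G1.S (Suc n) = e" by (rule ext) (simp add: G1.S_def ceq lessThan_Suc_atMost)
    then show ?thesis using eD by (simp add: G1.H_def)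
  qed
  have e_sum: "e x = (\<Sum>k\<le>n. complex_of_real (\<epsilon> k) * DL lam0 (p k) x)" for x
  proof -
    have xf: "xa = (\<lambda>x. \<Sum>k\<le>n. complex_of_real (\<epsilon> k) * p k x)" using xeq by auto
    have "DL lam0 xa = (\<lambda>x. \<Sum>k\<le>n. complex_of_real (\<epsilon> k) * DL lam0 (p k) x)"
      unfolding xf by (rule Dl_sum) (use psm in auto)
    then show ?thesis using xaD by simp
  qed
  have e_sbp: "e x = (\<Sum>j<n. complex_of_real (\<tau> (Suc j) - \<tau> j) * (- G1.H (Suc j) x))" for x
  proof -
    have "e x = (\<Sum>k\<le>n. complex_of_real (\<tau> k) * (complex_of_real (c k) * DL lam0 (p k) x))"
      unfolding e_sum by (rule sum.cong) (auto simp: eps_tau)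
    also have "\<dots> = (\<Sum>k\<le>n. complex_of_real (\<tau> k) * (G1.H (Suc k) x - G1.H k x))"
      by (rule sum.cong) (auto simp: Hstep)
    also have "\<dots> = (\<Sum>j<n. complex_of_real (\<tau> (Suc j) - \<tau> j) * (- G1.H (Suc j) x))"
      by (rule sbp[where h="\<lambda>k. G1.H k x"]) (auto simp: H0 HSn)
    finally show ?thesis .
  qed
  have nn: "{..<n} = {..n - 1}" using n1 by auto
  define G' where "G' = (\<lambda>j x. - G1.H (Suc j) x)"
  define \<delta> where "\<delta> = (\<lambda>j. \<tau> (Suc j) - \<tau> j)"
  have Gsm: "smooth_fun (G1.H k)" if "k \<le> Suc n" for k using G1.H_smooth that by blast
  have Ch2: "h t = 0" if hdef: "h = (\<lambda>x. \<Sum>j\<le>n - 1. complex_of_real (\<beta> j) * DL lam0 (G' j) x)"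
    and za: "zD (complex_of_real lam0) h a \<alpha>" and zb: "zD (complex_of_real lam0) h b \<beta>'"
    and cond: "n - 1 \<le> \<alpha> + \<beta>' \<or> ((\<exists>c. a < c \<and> c < b \<and> h c = 0) \<and> n - 1 \<le> \<alpha> + \<beta>' + 1)"
    and t: "a \<le> t" "t \<le> b" for \<beta> \<alpha> \<beta>' h t
  proof -
    define Q where "Q = (\<lambda>x. \<Sum>j\<le>n - 1. complex_of_real (- \<beta> j) * G1.S (Suc j) x)"
    have QE: "Q \<in> Espace L" unfolding Q_def by (rule Espace_sum) (use S_E n1 in auto)
    have Ssm: "\<And>j. j \<in> {..n - 1} \<Longrightarrow> smooth_fun (G1.S (Suc j))" using G1.S_smooth n1 by auto
    have Hsm: "\<And>j. j \<in> {..n - 1} \<Longrightarrow> smooth_fun (G1.H (Suc j))" using Gsm n1 by auto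
    have D1: "DL lam0 Q = (\<lambda>x. \<Sum>j\<le>n - 1. complex_of_real (- \<beta> j) * G1.H (Suc j) x)"
      unfolding Q_def G1.H_def by (rule Dl_sum[OF _ Ssm]) auto
    have "DL lam0 (DL lam0 Q) = (\<lambda>x. \<Sum>j\<le>n - 1. complex_of_real (- \<beta> j) * DL lam0 (G1.H (Suc j)) x)"
      unfolding D1 by (rule Dl_sum[OF _ Hsm]) auto
    also have "\<dots> = h"
    proof
      fix x
      have "DL lam0 (G' j) = (\<lambda>x. - DL lam0 (G1.H (Suc j)) x)" if "j \<in> {..n - 1}" for j
        unfolding G'_def by (rule Dl_neg[OF Hsm[OF that]])
      then show "(\<Sum>j\<le>n - 1. complex_of_real (- \<beta> j) * DL lam0 (G1.H (Suc j)) x) = h x"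
        unfolding hdef by (auto intro!: sum.cong)
    qed
    finally have hQ: "DL lam0 (DL lam0 Q) = h" .
    have "DL lam0 (DL lam0 Q) \<in> Espace ls" by (rule Dl2_F) (use QE in \<open>simp add: L_def\<close>)
    then have hE: "h \<in> Espace ls" unfolding hQ .
    show ?thesis by (rule ChF[OF hE ch n1 ab za zb cond t])
  qed
  interpret G2: Gsetup lam0 a b "n - 1" G' \<delta> e
  proof (unfold_locales)
    show "a < b" by (rule ab)
    show "\<And>k. k \<le> n - 1 \<Longrightarrow> smooth_fun (G' k) \<and> rv (G' k)"
      unfolding G'_def using G1.H_smooth G1.H_rv smooth_neg rv_neg n1 by auto
    show "\<And>k t. k \<le> n - 1 \<Longrightarrow> a < t \<Longrightarrow> t < b \<Longrightarrow> 0 \<le> Re (G' k t)"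
    proof -
      fix k t assume "k \<le> n - 1" "a < t" "t < b"
      then have "Re (G1.H (Suc k) t) < 0" using G1.H_neg[of "Suc k" t] n1 by auto
      then show "0 \<le> Re (G' k t)" by (simp add: G'_def)
    qed
    show "\<And>k. k \<le> n - 1 \<Longrightarrow> zD (complex_of_real lam0) (G' k) a k \<and> (DL lam0 ^^ k) (G' k) a \<noteq> 0"
    proof -
      fix k assume k: "k \<le> n - 1"
      have k1: "1 \<le> Suc k" "Suc k \<le> n" using k n1 by auto
      have sm: "smooth_fun (G1.H (Suc k))" using Gsm k1 by auto
      show "zD (complex_of_real lam0) (G' k) a k \<and> (DL lam0 ^^ k) (G' k) a \<noteq> 0"
        using G1.H_za[OF k1] G1.H_exact[OF k1] unfolding G'_def by (simp add: zD_neg[OF sm] Dlk_neg[OF sm])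
    qed
    show "\<And>k. k \<le> n - 1 \<Longrightarrow> zD (complex_of_real lam0) (G' k) b (n - 1 - k)"
    proof -
      fix k assume k: "k \<le> n - 1"
      have k1: "1 \<le> Suc k" "Suc k \<le> n" using k n1 by auto
      have sm: "smooth_fun (G1.H (Suc k))" using Gsm k1 by auto
      show "zD (complex_of_real lam0) (G' k) b (n - 1 - k)"
        using G1.H_zb[OF k1] unfolding G'_def by (simp add: zD_neg[OF sm])
    qed
    show "smooth_fun e" by (rule es)
    show "\<And>x. DL lam0 e x = 0" by (rule eD)
    show "0 < Re (e a)" by (rule ea)
    show "\<And>x. e x = (\<Sum>k\<le>n - 1. complex_of_real (\<delta> k) * G' k x)"
      using e_sbp unfolding nn G'_def \<delta>_def by simp
  qed (rule Ch2, assumption+)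
  have dpos: "\<tau> j < \<tau> (Suc j)" if "j < n" for j
    using G2.gamma_pos[of j] that unfolding \<delta>_def by simp
  have tau_mono: "\<tau> k \<le> \<tau> m" if "k \<le> m" "m \<le> n" for k m
    using that
  proof (induction m)
    case 0 then show ?case by simp
  next
    case (Suc m)
    show ?case
    proof (cases "k = Suc m")
      case True then show ?thesis by simp
    next
      case False
      then have "\<tau> k \<le> \<tau> m" using Suc by simp
      moreover have "\<tau> m < \<tau> (Suc m)" using dpos Suc.prems by simp
      ultimately show ?thesis by simp
    qed
  qed
  define t where "t = (\<lambda>k. a + \<tau> k)"
  define \<alpha> where "\<alpha> = (\<lambda>k. c k * exp (- lam0 * t k))"
  have expc: "exp (x * y) * (z * exp (- x * y)) = z" for x y z :: real
    by (simp add: exp_minus field_simps)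
  have A: "exp (lam0 * t k) * \<alpha> k = c k" for k
    unfolding \<alpha>_def by (rule expc)
  have B: "t k * exp (lam0 * t k) * \<alpha> k = a * c k + \<epsilon> k" if "k \<le> n" for k
  proof -
    have "t k * exp (lam0 * t k) * \<alpha> k = t k * c k" using A[of k] by (simp add: mult.assoc)
    also have "\<dots> = a * c k + \<epsilon> k" using eps_tau[OF that] by (simp add: t_def algebra_simps)
    finally show ?thesis .
  qed
  have I1: "(\<Sum>k\<le>n. complex_of_real (exp (lam0 * t k) * \<alpha> k) * p k x) = complex_of_real (exp (lam0 * x))" for x
    using ceq[of x] e_val[of x] by (simp add: A)
  have I2gen: "(\<Sum>k\<le>n. complex_of_real (a * c k + \<epsilon> k) * p k x) = complex_of_real (x * exp (lam0 * x))" for x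
  proof -
    have "(\<Sum>k\<le>n. complex_of_real (a * c k + \<epsilon> k) * p k x)
       = complex_of_real a * (\<Sum>k\<le>n. complex_of_real (c k) * p k x) + (\<Sum>k\<le>n. complex_of_real (\<epsilon> k) * p k x)"
      by (simp add: sum.distrib sum_distrib_left algebra_simps)
    also have "\<dots> = complex_of_real a * e x + xa x" using ceq xeq by simp
    also have "\<dots> = complex_of_real (x * exp (lam0 * x))" by (simp add: e_val xa_val algebra_simps)
    finally show ?thesis .
  qed
  have I2: "(\<Sum>k\<le>n. complex_of_real (t k * exp (lam0 * t k) * \<alpha> k) * p k x) = complex_of_real (x * exp (lam0 * x))" for x
  proof -
    have "(\<Sum>k\<le>n. complex_of_real (t k * exp (lam0 * t k) * \<alpha> k) * p k x) = (\<Sum>k\<le>n. complex_of_real (a * c k + \<epsilon> k) * p k x)"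
      by (rule sum.cong) (simp_all add: B)
    then show ?thesis using I2gen by simp
  qed
  have tab: "t k \<in> {a..b}" if "k \<le> n" for k
    using tau_mono[of 0 k] tau_mono[of k n] that tau0 taun by (simp add: t_def)
  have apos: "\<alpha> k > 0" if "k \<le> n" for k
    using cpos[OF that] by (simp add: \<alpha>_def)
  have uniq: "\<forall>k\<le>n. t' k = t k \<and> \<alpha>' k = \<alpha> k"
    if U1: "\<forall>x\<in>{a..b}. (\<Sum>k\<le>n. complex_of_real (exp (lam0 * t' k) * \<alpha>' k) * p k x) = complex_of_real (exp (lam0 * x))"
      and U2: "\<forall>x\<in>{a..b}. (\<Sum>k\<le>n. complex_of_real (t' k * exp (lam0 * t' k) * \<alpha>' k) * p k x) = complex_of_real (x * exp (lam0 * x))"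
    for t' \<alpha>' :: "nat \<Rightarrow> real"
  proof -
    have L1: "\<forall>k\<le>n. complex_of_real (exp (lam0 * t' k) * \<alpha>' k - c k) = 0"
    proof (rule linind[OF psm pzo ab])
      fix x assume x: "a \<le> x" "x \<le> b"
      have "(\<Sum>k\<le>n. complex_of_real (exp (lam0 * t' k) * \<alpha>' k - c k) * p k x)
         = (\<Sum>k\<le>n. complex_of_real (exp (lam0 * t' k) * \<alpha>' k) * p k x) - (\<Sum>k\<le>n. complex_of_real (c k) * p k x)"
        by (simp add: sum_subtractf algebra_simps)
      also have "\<dots> = 0" using U1 x ceq[of x] e_val[of x] by simp
      finally show "(\<Sum>k\<le>n. complex_of_real (exp (lam0 * t' k) * \<alpha>' k - c k) * p k x) = 0" .
    qed
    have L2: "\<forall>k\<le>n. complex_of_real (t' k * exp (lam0 * t' k) * \<alpha>' k - (a * c k + \<epsilon> k)) = 0"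
    proof (rule linind[OF psm pzo ab])
      fix x assume x: "a \<le> x" "x \<le> b"
      have "(\<Sum>k\<le>n. complex_of_real (t' k * exp (lam0 * t' k) * \<alpha>' k - (a * c k + \<epsilon> k)) * p k x)
         = (\<Sum>k\<le>n. complex_of_real (t' k * exp (lam0 * t' k) * \<alpha>' k) * p k x) - (\<Sum>k\<le>n. complex_of_real (a * c k + \<epsilon> k) * p k x)"
        by (simp add: sum_subtractf algebra_simps)
      also have "\<dots> = 0" using U2 x I2gen[of x] by simp
      finally show "(\<Sum>k\<le>n. complex_of_real (t' k * exp (lam0 * t' k) * \<alpha>' k - (a * c k + \<epsilon> k)) * p k x) = 0" .
    qed
    show ?thesis
    proof (intro allI impI)
      fix k assume k: "k \<le> n"
      have "complex_of_real (exp (lam0 * t' k) * \<alpha>' k - c k) = 0" using L1 k by blast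
      then have "exp (lam0 * t' k) * \<alpha>' k - c k = 0" by (simp only: of_real_eq_0_iff)
      then have e1: "exp (lam0 * t' k) * \<alpha>' k = c k" by simp
      have "complex_of_real (t' k * exp (lam0 * t' k) * \<alpha>' k - (a * c k + \<epsilon> k)) = 0" using L2 k by blast
      then have "t' k * exp (lam0 * t' k) * \<alpha>' k - (a * c k + \<epsilon> k) = 0" by (simp only: of_real_eq_0_iff)
      then have e2: "t' k * exp (lam0 * t' k) * \<alpha>' k = a * c k + \<epsilon> k" by simp
      have "t' k * c k = t k * c k" using e1 e2 B[OF k] A[of k] by (simp add: mult.assoc)
      then have tt: "t' k = t k" using cpos[OF k] by simp
      have "\<alpha>' k = c k * exp (- lam0 * t' k)"
        using e1 by (simp add: exp_minus field_simps)
      then show "t' k = t k \<and> \<alpha>' k = \<alpha> k" using tt by (simp add: \<alpha>_def)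
    qed
  qed
  show ?thesis
    apply (rule exI[of _ t], rule exI[of _ \<alpha>])
    using tab apos I1 I2 uniq by blast
qed


end
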